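(* Fix $c>0$, suppose $(\log n)^2\ll k\ll\sqrt n$ and $m=c\frac{k^2n}{\log n}(1+o(1))$, and let $G\sim G(n,m)$. Let $a_n=k\sigma/\mu$ and let $t_n$ be any sequence with $t_n/\sqrt{2\log n}\to1$. Then $$\sup_{j}\left|\frac{\mathbb E\big[e^{a_nY_2}\mathbf 1\{Y_2\ge t_n\}\mid d_1=j\big]}{\mathbb E\big[e^{a_nY_2}\mathbf 1\{Y_2\ge t_n\}\big]}-1\right|\to0,$$ where the supremum is over $j\in\{0,1,\dots,n-1\}$ with $\mathbb P(d_1=j)>0$.
   Context: $N=\binom n2$; $G(n,m)$ is the uniform distribution over graphs on $[n]$ with exactly $m$ edges; asymptotics are as $n\to\infty$ with $k=k(n),m=m(n)$, and $a\ll b$ means $a/b\to0$. $d_i$ is the degree of vertex $i$. With $p=m/N$: $\mu=(n-1)p=2m/n$ and $\sigma^2=(n-1)p(1-p)\frac{N}{N-1}\cdot\frac{N-(n-1)}{N-1}$ are the mean and variance of a vertex degree, and $Y_i=(d_i-\mu)/\sigma$. *)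

theory Defs
  imports "HOL-Analysis.Analysis"
begin

definition all_edges :: "nat \<Rightarrow> nat set set" where
  "all_edges n = {e. \<exists>i j. 1 \<le> i \<and> i < j \<and> j \<le> n \<and> e = {i, j}}"

definition Gnm :: "nat \<Rightarrow> nat \<Rightarrow> nat set set set" where
  "Gnm n m = {E. E \<subseteq> all_edges n \<and> card E = m}"

definition deg :: "nat set set \<Rightarrow> nat \<Rightarrow> nat" where
  "deg E i = card {e \<in> E. i \<in> e}"

definition Gprob :: "nat \<Rightarrow> nat \<Rightarrow> (nat set set \<Rightarrow> bool) \<Rightarrow> real" where
  "Gprob n m P = real (card {E \<in> Gnm n m. P E}) / real (card (Gnm n m))"

definition Gexp :: "nat \<Rightarrow> nat \<Rightarrow> (nat set set \<Rightarrow> real) \<Rightarrow> real" where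
  "Gexp n m f = (\<Sum>E\<in>Gnm n m. f E) / real (card (Gnm n m))"

text \<open>Conditional expectation given the event P (assumed of positive probability).\<close>
definition Gcondexp :: "nat \<Rightarrow> nat \<Rightarrow> (nat set set \<Rightarrow> real) \<Rightarrow> (nat set set \<Rightarrow> bool) \<Rightarrow> real" where
  "Gcondexp n m f P = (\<Sum>E\<in>{E \<in> Gnm n m. P E}. f E) / real (card {E \<in> Gnm n m. P E})"

definition NN :: "nat \<Rightarrow> real" where
  "NN n = real (n choose 2)"

definition pp :: "nat \<Rightarrow> nat \<Rightarrow> real" where
  "pp n m = real m / NN n"

definition mu :: "nat \<Rightarrow> nat \<Rightarrow> real" where
  "mu n m = (real n - 1) * pp n m"

definition sigma :: "nat \<Rightarrow> nat \<Rightarrow> real" where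
  "sigma n m = sqrt ((real n - 1) * pp n m * (1 - pp n m) * (NN n / (NN n - 1))
                     * ((NN n - (real n - 1)) / (NN n - 1)))"

definition Ydeg :: "nat \<Rightarrow> nat \<Rightarrow> nat set set \<Rightarrow> nat \<Rightarrow> real" where
  "Ydeg n m E i = (real (deg E i) - mu n m) / sigma n m"

end

theory Submission
  imports Defs
begin


lemma fiber_bij:
  assumes "finite A" "finite B" "A \<inter> B = {}" "j \<le> r"
  shows "bij_betw (\<lambda>E. (E \<inter> A, E \<inter> B)) {E. E \<subseteq> A \<union> B \<and> card E = r \<and> card (E \<inter> A) = j}
           ({S. S \<subseteq> A \<and> card S = j} \<times> {R. R \<subseteq> B \<and> card R = r - j})"
proof (rule bij_betw_byWitness[where f' = "\<lambda>(S,R). S \<union> R"])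
  show "\<forall>a\<in>{E. E \<subseteq> A \<union> B \<and> card E = r \<and> card (E \<inter> A) = j}.
          (case (a \<inter> A, a \<inter> B) of (S, R) \<Rightarrow> S \<union> R) = a" by auto
  show "\<forall>a'\<in>{S. S \<subseteq> A \<and> card S = j} \<times> {R. R \<subseteq> B \<and> card R = r - j}.
          ((\<lambda>(S, R). S \<union> R) a' \<inter> A, (\<lambda>(S, R). S \<union> R) a' \<inter> B) = a'"
    using assms(3) by auto
  show "(\<lambda>E. (E \<inter> A, E \<inter> B)) ` {E. E \<subseteq> A \<union> B \<and> card E = r \<and> card (E \<inter> A) = j}
        \<subseteq> {S. S \<subseteq> A \<and> card S = j} \<times> {R. R \<subseteq> B \<and> card R = r - j}"
  proof
    fix p assume "p \<in> (\<lambda>E. (E \<inter> A, E \<inter> B)) ` {E. E \<subseteq> A \<union> B \<and> card E = r \<and> card (E \<inter> A) = j}"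
    then obtain E where E: "E \<subseteq> A \<union> B" "card E = r" "card (E \<inter> A) = j" and p: "p = (E \<inter> A, E \<inter> B)" by auto
    have fE: "finite E" using E(1) assms(1,2) finite_subset by blast
    have "E = (E \<inter> A) \<union> (E \<inter> B)" using E(1) by auto
    hence "card E = card (E \<inter> A) + card (E \<inter> B)"
      by (metis assms(3) card_Un_disjoint fE finite_Int inf_assoc inf_bot_right inf_left_commute)
    thus "p \<in> {S. S \<subseteq> A \<and> card S = j} \<times> {R. R \<subseteq> B \<and> card R = r - j}" using E p by auto
  qed
  show "(\<lambda>(S, R). S \<union> R) ` ({S. S \<subseteq> A \<and> card S = j} \<times> {R. R \<subseteq> B \<and> card R = r - j})
        \<subseteq> {E. E \<subseteq> A \<union> B \<and> card E = r \<and> card (E \<inter> A) = j}"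
  proof
    fix E assume "E \<in> (\<lambda>(S, R). S \<union> R) ` ({S. S \<subseteq> A \<and> card S = j} \<times> {R. R \<subseteq> B \<and> card R = r - j})"
    then obtain S R where S: "S \<subseteq> A" "card S = j" and R: "R \<subseteq> B" "card R = r - j" and E: "E = S \<union> R" by auto
    have fin: "finite S" "finite R" using S R assms finite_subset by auto
    have dj: "S \<inter> R = {}" using S R assms(3) by auto
    have "card E = r" using E card_Un_disjoint[OF fin dj] S R assms(4) by simp
    moreover have "E \<inter> A = S" using E S R assms(3) by auto
    ultimately show "E \<in> {E. E \<subseteq> A \<union> B \<and> card E = r \<and> card (E \<inter> A) = j}" using E S R S(2) by auto
  qed
qed

lemma fiber_sum:
  fixes g :: "'a set \<Rightarrow> real"
  assumes "finite A" "finite B" "A \<inter> B = {}" "j \<le> r"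
  shows "(\<Sum>E\<in>{E. E \<subseteq> A \<union> B \<and> card E = r \<and> card (E \<inter> A) = j}. g (E \<inter> B))
         = real (card A choose j) * (\<Sum>R\<in>{R. R \<subseteq> B \<and> card R = r - j}. g R)"
proof -
  have "(\<Sum>E\<in>{E. E \<subseteq> A \<union> B \<and> card E = r \<and> card (E \<inter> A) = j}. g (E \<inter> B))
      = (\<Sum>p\<in>{S. S \<subseteq> A \<and> card S = j} \<times> {R. R \<subseteq> B \<and> card R = r - j}. g (snd p))"
    using sum.reindex_bij_betw[OF fiber_bij[OF assms], of "\<lambda>p. g (snd p)"] by simp
  also have "\<dots> = (\<Sum>S\<in>{S. S \<subseteq> A \<and> card S = j}. \<Sum>R\<in>{R. R \<subseteq> B \<and> card R = r - j}. g R)"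
    by (simp only: sum.cartesian_product split_def)
  also have "\<dots> = real (card A choose j) * (\<Sum>R\<in>{R. R \<subseteq> B \<and> card R = r - j}. g R)"
    using n_subsets[OF assms(1), of j] by simp
  finally show ?thesis .
qed

lemma fiber_card:
  assumes "finite A" "finite B" "A \<inter> B = {}" "j \<le> r"
  shows "card {E. E \<subseteq> A \<union> B \<and> card E = r \<and> card (E \<inter> A) = j}
         = (card A choose j) * (card B choose (r - j))"
proof -
  have "real (card {E. E \<subseteq> A \<union> B \<and> card E = r \<and> card (E \<inter> A) = j})
     = (\<Sum>E\<in>{E. E \<subseteq> A \<union> B \<and> card E = r \<and> card (E \<inter> A) = j}. (\<lambda>_. 1::real) (E \<inter> B))" by simp
  also have "\<dots> = real (card A choose j) * real (card B choose (r - j))"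
    using fiber_sum[OF assms, of "\<lambda>_. 1"] n_subsets[OF assms(2), of "r-j"] by simp
  finally show ?thesis by (simp only: of_nat_mult[symmetric] of_nat_eq_iff)
qed


definition E2 :: "nat set \<Rightarrow> nat set set" where "E2 V = {S. S \<subseteq> V \<and> card S = 2}"

lemma finite_E2: "finite V \<Longrightarrow> finite (E2 V)"
  unfolding E2_def by (rule finite_subset[of _ "Pow V"]) auto

lemma card_E2: "finite V \<Longrightarrow> card (E2 V) = card V choose 2"
  unfolding E2_def by (rule n_subsets)

lemma all_edges_E2: "all_edges n = E2 {1..n}"
proof
  show "all_edges n \<subseteq> E2 {1..n}" unfolding all_edges_def E2_def by auto
  show "E2 {1..n} \<subseteq> all_edges n"
  proof
    fix e assume "e \<in> E2 {1..n}"
    then obtain x y where e: "e = {x,y}" "x \<noteq> y" "e \<subseteq> {1..n}" unfolding E2_def card_2_iff by auto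
    show "e \<in> all_edges n"
    proof (cases "x < y")
      case True thus ?thesis using e unfolding all_edges_def by auto
    next
      case False hence "y < x" using e(2) by auto
      thus ?thesis using e unfolding all_edges_def by (auto simp: insert_commute)
    qed
  qed
qed

definition star1 :: "nat \<Rightarrow> nat set set" where "star1 n = {e \<in> all_edges n. 1 \<in> e}"
definition rest1 :: "nat \<Rightarrow> nat set set" where "rest1 n = E2 {2..n}"
definition star2 :: "nat \<Rightarrow> nat set set" where "star2 n = {e \<in> rest1 n. 2 \<in> e}"
definition rest12 :: "nat \<Rightarrow> nat set set" where "rest12 n = E2 {3..n}"

lemma finite_all_edges: "finite (all_edges n)"
  by (simp add: all_edges_E2 finite_E2)

lemma sub2: "S \<subseteq> {1..n} \<Longrightarrow> 1 \<notin> S \<Longrightarrow> S \<subseteq> {2..(n::nat)}"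
proof
  fix x assume "S \<subseteq> {1..n}" "1 \<notin> S" "x \<in> S"
  hence "1 \<le> x" "x \<noteq> 1" "x \<le> n" by auto
  thus "x \<in> {2..n}" by simp
qed

lemma all_edges_split: "all_edges n = star1 n \<union> rest1 n" and star1_rest1_disj: "star1 n \<inter> rest1 n = {}"
proof -
  have "{2..n} \<subseteq> {1..n}" by auto
  thus "all_edges n = star1 n \<union> rest1 n"
    unfolding star1_def rest1_def all_edges_E2 E2_def using sub2 by blast
  show "star1 n \<inter> rest1 n = {}" unfolding star1_def rest1_def E2_def by auto
qed

lemma star1_image: "star1 n = (\<lambda>x. {1,x}) ` {2..n}"
proof
  show "star1 n \<subseteq> (\<lambda>x. {1,x}) ` {2..n}"
  proof
    fix e assume "e \<in> star1 n"
    hence e0: "e \<in> all_edges n" "1 \<in> e" unfolding star1_def by auto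
    obtain i j where e: "1 \<le> i" "i < j" "j \<le> n" "e = {i,j}"
      using e0(1) unfolding all_edges_def mem_Collect_eq by blast
    have "1 = i \<or> 1 = j" using e0(2) e(4) by simp
    hence "i = 1" using e(1,2) by linarith
    thus "e \<in> (\<lambda>x. {1,x}) ` {2..n}" using e by (intro image_eqI[of _ _ j]) auto
  qed
  show "(\<lambda>x. {1,x}) ` {2..n} \<subseteq> star1 n"
  proof
    fix e assume "e \<in> (\<lambda>x. {1,x}) ` {2..n}"
    then obtain x where x: "x \<in> {2..n}" "e = {1,x}" by blast
    have "e \<in> all_edges n" unfolding all_edges_def mem_Collect_eq
      by (rule exI[of _ 1], rule exI[of _ x]) (use x in simp)
    thus "e \<in> star1 n" unfolding star1_def using x by simp
  qed
qed

lemma card_star1: "card (star1 n) = n - 1"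
proof -
  have "inj_on (\<lambda>x. {1::nat,x}) {2..n}" by (auto simp: inj_on_def doubleton_eq_iff)
  thus ?thesis by (simp add: star1_image card_image)
qed

lemma finite_rest1: "finite (rest1 n)" by (simp add: rest1_def finite_E2)
lemma finite_star1: "finite (star1 n)" by (simp add: star1_image)
lemma card_rest1: "card (rest1 n) = (n - 1) choose 2" by (simp add: rest1_def card_E2)

lemma sub3: "S \<subseteq> {2..n} \<Longrightarrow> 2 \<notin> S \<Longrightarrow> S \<subseteq> {3..(n::nat)}"
proof
  fix x assume "S \<subseteq> {2..n}" "2 \<notin> S" "x \<in> S"
  hence "2 \<le> x" "x \<noteq> 2" "x \<le> n" by auto
  thus "x \<in> {3..n}" by simp
qed

lemma rest1_split: "rest1 n = star2 n \<union> rest12 n" and star2_rest12_disj: "star2 n \<inter> rest12 n = {}"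
proof -
  have "{3..n} \<subseteq> {2..n}" by auto
  thus "rest1 n = star2 n \<union> rest12 n"
    unfolding star2_def rest12_def rest1_def E2_def using sub3 by blast
  show "star2 n \<inter> rest12 n = {}" unfolding star2_def rest12_def E2_def by auto
qed

lemma star2_image: "star2 n = (\<lambda>x. {2,x}) ` {3..n}"
proof
  show "star2 n \<subseteq> (\<lambda>x. {2,x}) ` {3..n}"
  proof
    fix e assume "e \<in> star2 n"
    then obtain x y where e: "e = {x,y}" "x \<noteq> y" "e \<subseteq> {2..n}" "2 \<in> e"
      unfolding star2_def rest1_def E2_def card_2_iff by auto
    have "\<exists>z. e = {2,z} \<and> z \<in> {3..n}"
    proof (cases "x = 2")
      case True thus ?thesis using e by (intro exI[of _ y]) auto
    next
      case False hence "y = 2" using e by auto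
      hence "e = {2,x}" using e(1) by blast
      thus ?thesis using e False by (intro exI[of _ x]) auto
    qed
    thus "e \<in> (\<lambda>x. {2,x}) ` {3..n}" by blast
  qed
  show "(\<lambda>x. {2,x}) ` {3..n} \<subseteq> star2 n"
    unfolding star2_def rest1_def E2_def by auto
qed

lemma card_star2: "card (star2 n) = n - 2"
proof -
  have "inj_on (\<lambda>x. {2::nat,x}) {3..n}" by (auto simp: inj_on_def doubleton_eq_iff)
  thus ?thesis by (simp add: star2_image card_image)
qed

lemma finite_star2: "finite (star2 n)" by (simp add: star2_image)
lemma finite_rest12: "finite (rest12 n)" by (simp add: rest12_def finite_E2)
lemma card_rest12: "card (rest12 n) = (n - 2) choose 2" by (simp add: rest12_def card_E2)

lemma deg1_eq: "E \<subseteq> all_edges n \<Longrightarrow> deg E 1 = card (E \<inter> star1 n)"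
  unfolding deg_def star1_def by (rule arg_cong[where f=card]) auto

lemma deg2_eq: "R \<subseteq> rest1 n \<Longrightarrow> deg R 2 = card (R \<inter> star2 n)"
  unfolding deg_def star2_def by (rule arg_cong[where f=card]) auto

lemma deg2_bounds:
  assumes "E \<subseteq> all_edges n"
  shows "deg (E \<inter> rest1 n) 2 \<le> deg E 2" "deg E 2 \<le> deg (E \<inter> rest1 n) 2 + 1"
proof -
  have fE: "finite E" using assms finite_all_edges finite_subset by blast
  have s1: "{e \<in> E \<inter> rest1 n. 2 \<in> e} \<subseteq> {e \<in> E. 2 \<in> e}" by auto
  show "deg (E \<inter> rest1 n) 2 \<le> deg E 2" unfolding deg_def by (rule card_mono) (use fE s1 in auto)
  have s2: "{e \<in> E. 2 \<in> e} \<subseteq> insert {1,2} {e \<in> E \<inter> rest1 n. 2 \<in> e}"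
  proof
    fix e assume e: "e \<in> {e \<in> E. 2 \<in> e}"
    hence "e \<in> star1 n \<union> rest1 n" using assms all_edges_split by auto
    moreover have "e \<in> star1 n \<Longrightarrow> e = {1,2}"
    proof -
      assume "e \<in> star1 n"
      then obtain x where "e = {1,x}" unfolding star1_image by blast
      moreover have "2 \<in> e" using e by simp
      ultimately show "e = {1,2}" by auto
    qed
    ultimately show "e \<in> insert {1,2} {e \<in> E \<inter> rest1 n. 2 \<in> e}" using e by auto
  qed
  have "deg E 2 \<le> card (insert {1,2} {e \<in> E \<inter> rest1 n. 2 \<in> e})"
    unfolding deg_def by (rule card_mono) (use fE s2 in auto)
  also have "\<dots> \<le> card {e \<in> E \<inter> rest1 n. 2 \<in> e} + 1"
    using fE by (simp add: card_insert_if)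
  finally show "deg E 2 \<le> deg (E \<inter> rest1 n) 2 + 1" unfolding deg_def .
qed

lemma Gnm_j_eq: "{E \<in> Gnm n m. deg E 1 = j} =
   {E. E \<subseteq> star1 n \<union> rest1 n \<and> card E = m \<and> card (E \<inter> star1 n) = j}"
proof (intro set_eqI iffI)
  fix E assume "E \<in> {E \<in> Gnm n m. deg E 1 = j}"
  hence E: "E \<subseteq> all_edges n" "card E = m" "deg E 1 = j" unfolding Gnm_def by auto
  thus "E \<in> {E. E \<subseteq> star1 n \<union> rest1 n \<and> card E = m \<and> card (E \<inter> star1 n) = j}"
    using deg1_eq[OF E(1)] all_edges_split[of n] by simp
next
  fix E assume "E \<in> {E. E \<subseteq> star1 n \<union> rest1 n \<and> card E = m \<and> card (E \<inter> star1 n) = j}"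
  hence E: "E \<subseteq> all_edges n" "card E = m" "card (E \<inter> star1 n) = j" using all_edges_split[of n] by auto
  thus "E \<in> {E \<in> Gnm n m. deg E 1 = j}"
    using deg1_eq[OF E(1)] unfolding Gnm_def by simp
qed

lemma count_j: "j \<le> m \<Longrightarrow> card {E \<in> Gnm n m. deg E 1 = j} = (n - 1 choose j) * (((n - 1) choose 2) choose (m - j))"
  unfolding Gnm_j_eq
  by (subst fiber_card) (simp_all add: finite_star1 finite_rest1 star1_rest1_disj card_star1 card_rest1)

lemma sum_j:
  fixes g :: "nat set set \<Rightarrow> real"
  shows "j \<le> m \<Longrightarrow> (\<Sum>E\<in>{E \<in> Gnm n m. deg E 1 = j}. g (E \<inter> rest1 n))
    = real (n - 1 choose j) * (\<Sum>R\<in>{R. R \<subseteq> rest1 n \<and> card R = m - j}. g R)"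
  unfolding Gnm_j_eq
  by (subst fiber_sum) (simp_all add: finite_star1 finite_rest1 star1_rest1_disj card_star1)

lemma sumR:
  fixes f :: "nat \<Rightarrow> real"
  shows "(\<Sum>R\<in>{R. R \<subseteq> rest1 n \<and> card R = r}. f (deg R 2))
     = (\<Sum>x\<le>r. real (n - 2 choose x) * real ((n - 2 choose 2) choose (r - x)) * f x)"
proof -
  let ?S = "{R. R \<subseteq> rest1 n \<and> card R = r}"
  have fS: "finite ?S" by (rule finite_subset[of _ "Pow (rest1 n)"]) (auto simp: finite_rest1)
  have img: "(\<lambda>R. card (R \<inter> star2 n)) ` ?S \<subseteq> {..r}"
  proof
    fix y assume "y \<in> (\<lambda>R. card (R \<inter> star2 n)) ` ?S"
    then obtain R where R: "R \<in> ?S" "y = card (R \<inter> star2 n)" by auto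
    have "finite R" using R finite_rest1 finite_subset by auto
    hence "card (R \<inter> star2 n) \<le> card R" by (simp add: card_mono)
    thus "y \<in> {..r}" using R by auto
  qed
  have "(\<Sum>R\<in>?S. f (deg R 2)) = (\<Sum>R\<in>?S. f (card (R \<inter> star2 n)))"
    by (rule sum.cong) (auto simp: deg2_eq)
  also have "\<dots> = (\<Sum>x\<le>r. \<Sum>R\<in>{R \<in> ?S. card (R \<inter> star2 n) = x}. f (card (R \<inter> star2 n)))"
    by (rule sum.group[OF fS _ img, symmetric]) simp
  also have "\<dots> = (\<Sum>x\<le>r. real (n - 2 choose x) * real ((n - 2 choose 2) choose (r - x)) * f x)"
  proof (rule sum.cong[OF refl])
    fix x assume x: "x \<in> {..r}"
    have eq: "{R \<in> ?S. card (R \<inter> star2 n) = x} = {R. R \<subseteq> star2 n \<union> rest12 n \<and> card R = r \<and> card (R \<inter> star2 n) = x}"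
      using rest1_split by auto
    have "(\<Sum>R\<in>{R \<in> ?S. card (R \<inter> star2 n) = x}. f (card (R \<inter> star2 n)))
        = (\<Sum>R\<in>{R \<in> ?S. card (R \<inter> star2 n) = x}. f x)" by (rule sum.cong) auto
    also have "\<dots> = real (card {R \<in> ?S. card (R \<inter> star2 n) = x}) * f x" by simp
    also have "card {R \<in> ?S. card (R \<inter> star2 n) = x} = (n - 2 choose x) * ((n - 2 choose 2) choose (r - x))"
      unfolding eq using x
      by (subst fiber_card) (simp_all add: finite_star2 finite_rest12 star2_rest12_disj card_star2 card_rest12)
    finally show "(\<Sum>R\<in>{R \<in> ?S. card (R \<inter> star2 n) = x}. f (card (R \<inter> star2 n)))
        = real (n - 2 choose x) * real ((n - 2 choose 2) choose (r - x)) * f x" by simp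
  qed
  finally show ?thesis .
qed


lemma binom_suc_mult: "(B choose Suc y) * Suc y = (B choose y) * (B - y)"
proof (cases B)
  case 0 thus ?thesis by simp
next
  case (Suc b)
  have "(B choose Suc y) * Suc y = B * (b choose y)"
    using Suc_times_binomial[of y b] Suc by (simp add: mult.commute)
  also have "\<dots> = (B - y) * (B choose y)" using binomial_absorb_comp[of B y] Suc by simp
  finally show ?thesis by simp
qed

definition W :: "nat \<Rightarrow> nat \<Rightarrow> nat \<Rightarrow> nat \<Rightarrow> real" where
  "W K B r x = real (K choose x) * real (B choose (r - x))"

definition SS :: "nat \<Rightarrow> nat \<Rightarrow> (nat \<Rightarrow> real) \<Rightarrow> nat \<Rightarrow> nat \<Rightarrow> real" where
  "SS K B f r s = (\<Sum>x\<le>r. W K B r x * f (x + s))"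

lemma W_nonneg: "W K B r x \<ge> 0" by (simp add: W_def)

lemma W_step1: "x \<le> r \<Longrightarrow> real (Suc r - x) * W K B (Suc r) x = W K B r x * real (B - (r - x))"
proof -
  assume x: "x \<le> r"
  hence e: "Suc r - x = Suc (r - x)" by simp
  have "(B choose Suc (r - x)) * Suc (r - x) = (B choose (r - x)) * (B - (r - x))" by (rule binom_suc_mult)
  hence "real (B choose Suc (r - x)) * real (Suc (r - x)) = real (B choose (r - x)) * real (B - (r - x))"
    by (metis of_nat_mult)
  thus ?thesis unfolding W_def e by (simp add: algebra_simps)
qed

lemma W_step2: "real (Suc x) * W K B (Suc r) (Suc x) = W K B r x * real (K - x)"
proof -
  have H: "real (K choose Suc x) * real (Suc x) = real (K choose x) * real (K - x)"
    using binom_suc_mult[of K x] by (metis of_nat_mult)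
  have "real (Suc x) * W K B (Suc r) (Suc x) = (real (K choose Suc x) * real (Suc x)) * real (B choose (r - x))"
    by (simp add: W_def)
  also have "\<dots> = (real (K choose x) * real (K - x)) * real (B choose (r - x))" by (simp only: H)
  also have "\<dots> = W K B r x * real (K - x)" by (simp add: W_def)
  finally show ?thesis .
qed

lemma step_id:
  "real (Suc r) * SS K B f (Suc r) s =
     (\<Sum>x\<le>r. W K B r x * (real (B - (r - x)) * f (x + s) + real (K - x) * f (x + s + 1)))"
proof -
  have split: "real (Suc r) * SS K B f (Suc r) s =
      (\<Sum>x\<le>Suc r. real (Suc r - x) * W K B (Suc r) x * f (x + s)) +
      (\<Sum>x\<le>Suc r. real x * W K B (Suc r) x * f (x + s))"
    unfolding SS_def sum_distrib_left sum.distrib[symmetric]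
    by (rule sum.cong[OF refl]) (auto simp: algebra_simps of_nat_diff)
  have A: "(\<Sum>x\<le>Suc r. real (Suc r - x) * W K B (Suc r) x * f (x + s)) =
           (\<Sum>x\<le>r. W K B r x * real (B - (r - x)) * f (x + s))"
  proof -
    have "(\<Sum>x\<le>Suc r. real (Suc r - x) * W K B (Suc r) x * f (x + s)) =
          (\<Sum>x\<le>r. real (Suc r - x) * W K B (Suc r) x * f (x + s)) + 0"
      by (subst sum.atMost_Suc) simp
    also have "\<dots> = (\<Sum>x\<le>r. W K B r x * real (B - (r - x)) * f (x + s))"
    proof (simp only: add_0_right, rule sum.cong[OF refl])
      fix x assume "x \<in> {..r}"
      hence "real (Suc r - x) * W K B (Suc r) x = W K B r x * real (B - (r - x))" by (intro W_step1) simp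
      thus "real (Suc r - x) * W K B (Suc r) x * f (x + s) = W K B r x * real (B - (r - x)) * f (x + s)" by simp
    qed
    finally show ?thesis .
  qed
  have B: "(\<Sum>x\<le>Suc r. real x * W K B (Suc r) x * f (x + s)) =
           (\<Sum>x\<le>r. W K B r x * real (K - x) * f (x + s + 1))"
  proof -
    have "(\<Sum>x\<le>Suc r. real x * W K B (Suc r) x * f (x + s)) =
          (\<Sum>x\<le>r. real (Suc x) * W K B (Suc r) (Suc x) * f (Suc x + s)) + 0"
      by (subst sum.atMost_Suc_shift) simp
    also have "\<dots> = (\<Sum>x\<le>r. W K B r x * real (K - x) * f (x + s + 1))"
      by (simp only: W_step2 add_0_right) simp
    finally show ?thesis .
  qed
  show ?thesis unfolding split A B sum.distrib[symmetric] by (rule sum.cong) (auto simp: algebra_simps)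
qed

lemma W_zero: "K < x \<or> B < r - x \<Longrightarrow> W K B r x = 0"
  by (auto simp: W_def)

lemma SS_nonneg: "(\<And>x. 0 \<le> f x) \<Longrightarrow> 0 \<le> SS K B f r s"
  unfolding SS_def by (intro sum_nonneg mult_nonneg_nonneg W_nonneg) auto

lemma aux_lin: "a + b = (c::real) \<Longrightarrow> w * (a * F + b * G) = c * (w * F) + w * b * (G - F)"
proof -
  assume "a + b = c" hence "c = a + b" by simp
  thus ?thesis by (simp add: algebra_simps)
qed

lemma step_decomp:
  assumes r: "r < K + B"
  shows "real (Suc r) * SS K B f (Suc r) s = real (K + B - r) * SS K B f r s +
     (\<Sum>x\<le>r. W K B r x * real (K - x) * (f (x + s + 1) - f (x + s)))"
proof -
  have "real (Suc r) * SS K B f (Suc r) s =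
     (\<Sum>x\<le>r. W K B r x * (real (B - (r - x)) * f (x + s) + real (K - x) * f (x + s + 1)))"
    by (rule step_id)
  also have "\<dots> = (\<Sum>x\<le>r. real (K + B - r) * (W K B r x * f (x + s)) +
        W K B r x * real (K - x) * (f (x + s + 1) - f (x + s)))"
  proof (rule sum.cong[OF refl])
    fix x assume x: "x \<in> {..r}"
    show "W K B r x * (real (B - (r - x)) * f (x + s) + real (K - x) * f (x + s + 1)) =
      real (K + B - r) * (W K B r x * f (x + s)) + W K B r x * real (K - x) * (f (x + s + 1) - f (x + s))"
    proof (cases "K < x \<or> B < r - x")
      case True thus ?thesis by (simp add: W_zero)
    next
      case False
      hence "x \<le> K" "r \<le> B + x" "x \<le> r" using x by auto
      hence "real (B - (r - x)) + real (K - x) = real (K + B - r)" using r by (simp add: of_nat_diff)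
      thus ?thesis by (rule aux_lin)
    qed
  qed
  also have "\<dots> = real (K + B - r) * SS K B f r s +
     (\<Sum>x\<le>r. W K B r x * real (K - x) * (f (x + s + 1) - f (x + s)))"
    unfolding SS_def sum.distrib sum_distrib_left by simp
  finally show ?thesis .
qed

lemma binom_N: "real ((N::nat) choose Suc r) * real (Suc r) = real (N choose r) * real (N - r)"
  using binom_suc_mult[of N r] by (metis of_nat_mult)

lemma step_bounds:
  assumes mono: "\<And>x. f x \<le> f (Suc x)" and r: "r < K + B"
  shows "SS K B f r s / real ((K+B) choose r) \<le> SS K B f (Suc r) s / real ((K+B) choose Suc r)"
    and "SS K B f (Suc r) s / real ((K+B) choose Suc r) \<le> SS K B f r s / real ((K+B) choose r)
         + real K / real (K + B - r) * (SS K B f r (Suc s) / real ((K+B) choose r) - SS K B f r s / real ((K+B) choose r))"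
proof -
  define N where "N = K + B"
  define D where "D = (\<Sum>x\<le>r. W K B r x * real (K - x) * (f (x + s + 1) - f (x + s)))"
  have dec: "real (Suc r) * SS K B f (Suc r) s = real (N - r) * SS K B f r s + D"
    unfolding N_def D_def by (rule step_decomp[OF r])
  have D0: "0 \<le> D" unfolding D_def
    by (intro sum_nonneg mult_nonneg_nonneg W_nonneg) (use mono in auto)
  have D1: "D \<le> real K * (SS K B f r (Suc s) - SS K B f r s)"
  proof -
    have "D \<le> (\<Sum>x\<le>r. real K * (W K B r x * (f (x + Suc s) - f (x + s))))" unfolding D_def
    proof (rule sum_mono)
      fix x assume "x \<in> {..r}"
      have a: "0 \<le> W K B r x * (f (x + s + 1) - f (x + s))"
        by (intro mult_nonneg_nonneg W_nonneg) (use mono in auto)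
      have "W K B r x * real (K - x) * (f (x + s + 1) - f (x + s)) = real (K - x) * (W K B r x * (f (x + s + 1) - f (x + s)))"
        by simp
      also have "\<dots> \<le> real K * (W K B r x * (f (x + s + 1) - f (x + s)))"
        by (rule mult_right_mono[OF _ a]) simp
      finally show "W K B r x * real (K - x) * (f (x + s + 1) - f (x + s)) \<le> real K * (W K B r x * (f (x + Suc s) - f (x + s)))"
        by simp
    qed
    also have "\<dots> = real K * (SS K B f r (Suc s) - SS K B f r s)"
      unfolding SS_def sum_distrib_left[symmetric] sum_subtractf[symmetric] by (simp add: algebra_simps)
    finally show ?thesis .
  qed
  have Cpos: "real (N choose r) > 0" using r unfolding N_def by simp
  have Nr: "real (N - r) > 0" using r unfolding N_def by simp
  have key: "SS K B f (Suc r) s / real (N choose Suc r) = SS K B f r s / real (N choose r) + D / (real (N - r) * real (N choose r))"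
  proof -
    have "SS K B f (Suc r) s / real (N choose Suc r) = (real (Suc r) * SS K B f (Suc r) s) / (real (N choose Suc r) * real (Suc r))"
      by simp
    also have "\<dots> = (real (N - r) * SS K B f r s + D) / (real (N choose r) * real (N - r))"
      unfolding dec binom_N ..
    also have "\<dots> = SS K B f r s / real (N choose r) + D / (real (N - r) * real (N choose r))"
      using Cpos Nr by (simp add: field_simps)
    finally show ?thesis .
  qed
  show "SS K B f r s / real ((K+B) choose r) \<le> SS K B f (Suc r) s / real ((K+B) choose Suc r)"
    using key D0 Cpos Nr unfolding N_def[symmetric] by (simp add: divide_nonneg_nonneg)
  have "D / (real (N - r) * real (N choose r)) \<le> real K * (SS K B f r (Suc s) - SS K B f r s) / (real (N - r) * real (N choose r))"
    using D1 Cpos Nr by (simp add: divide_right_mono)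
  also have "\<dots> = real K / real (N - r) * (SS K B f r (Suc s) / real (N choose r) - SS K B f r s / real (N choose r))"
    using Cpos Nr by (simp add: field_simps)
  finally have dle: "D / (real (N - r) * real (N choose r)) \<le> real K / real (N - r) * (SS K B f r (Suc s) / real (N choose r) - SS K B f r s / real (N choose r))" .
  have "SS K B f (Suc r) s / real (N choose Suc r) \<le> SS K B f r s / real (N choose r) + real K / real (N - r) * (SS K B f r (Suc s) / real (N choose r) - SS K B f r s / real (N choose r))"
    unfolding key by (rule add_left_mono[OF dle])
  thus "SS K B f (Suc r) s / real ((K+B) choose Suc r) \<le> SS K B f r s / real ((K+B) choose r)
         + real K / real (K + B - r) * (SS K B f r (Suc s) / real ((K+B) choose r) - SS K B f r s / real ((K+B) choose r))"
    by (simp only: N_def)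
qed


definition PP :: "nat \<Rightarrow> nat \<Rightarrow> (nat \<Rightarrow> real) \<Rightarrow> nat \<Rightarrow> nat \<Rightarrow> real" where
  "PP K B f r s = SS K B f r s / real ((K + B) choose r)"

lemma ratio_W:
  assumes "x < r"
  shows "W K B r x * (real (K - x) * real (r - x)) \<le> W K B r (Suc x) * (real (Suc x) * (real B + real x + 1))"
proof -
  obtain y where y: "r - x = Suc y" "r - Suc x = y" using assms by (metis Suc_diff_Suc)
  have h1: "real (K choose Suc x) * real (Suc x) = real (K choose x) * real (K - x)"
    using binom_suc_mult[of K x] by (metis of_nat_mult)
  have h2: "real (B choose Suc y) * real (Suc y) = real (B choose y) * real (B - y)"
    using binom_suc_mult[of B y] by (metis of_nat_mult)
  have "W K B r x * (real (K - x) * real (r - x)) = (real (K choose x) * real (K - x)) * (real (B choose Suc y) * real (Suc y))"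
    unfolding W_def y by (simp add: algebra_simps)
  also have "\<dots> = (real (K choose Suc x) * real (Suc x)) * (real (B choose y) * real (B - y))"
    unfolding h1 h2 ..
  also have "\<dots> \<le> (real (K choose Suc x) * real (Suc x)) * (real (B choose y) * (real B + real x + 1))"
    by (intro mult_left_mono) auto
  also have "\<dots> = W K B r (Suc x) * (real (Suc x) * (real B + real x + 1))"
    unfolding W_def y by (simp add: algebra_simps)
  finally show ?thesis .
qed

lemma geo_W:
  assumes "0 \<le> \<eta>" "\<eta> \<le> 1"
    and h: "\<And>i. i < M \<Longrightarrow> (1 - \<eta>) * W K B r (x0 + i) \<le> W K B r (x0 + i + 1)"
  shows "\<And>i. i \<le> M \<Longrightarrow> (1 - \<eta>) ^ i * W K B r x0 \<le> W K B r (x0 + i)"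
proof -
  fix i show "i \<le> M \<Longrightarrow> (1 - \<eta>) ^ i * W K B r x0 \<le> W K B r (x0 + i)"
  proof (induction i)
    case 0 thus ?case by simp
  next
    case (Suc i)
    have "(1 - \<eta>) ^ Suc i * W K B r x0 = (1 - \<eta>) * ((1 - \<eta>) ^ i * W K B r x0)" by simp
    also have "\<dots> \<le> (1 - \<eta>) * W K B r (x0 + i)" using Suc assms by (intro mult_left_mono) auto
    also have "\<dots> \<le> W K B r (x0 + Suc i)" using h[of i] Suc.prems by simp
    finally show ?case .
  qed
qed

lemma shape_nonneg:
  fixes f :: "nat \<Rightarrow> real"
  assumes fz: "\<And>x. x \<le> x0 \<Longrightarrow> f x = 0" and fs: "\<And>x. x \<noteq> x0 \<Longrightarrow> f (Suc x) = lam * f x"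
    and lam: "0 < lam" and f1: "0 \<le> f (Suc x0)"
  shows "0 \<le> f x"
proof (induction x)
  case 0 thus ?case using fz by simp
next
  case (Suc x) thus ?case using fs[of x] f1 lam by (cases "x = x0") auto
qed

lemma shape_pow:
  fixes f :: "nat \<Rightarrow> real"
  assumes fs: "\<And>x. x \<noteq> x0 \<Longrightarrow> f (Suc x) = lam * f x"
  shows "f (Suc x0 + i) = lam ^ i * f (Suc x0)"
proof (induction i)
  case 0 thus ?case by simp
next
  case (Suc i) thus ?case using fs[of "Suc x0 + i"] by simp
qed

lemma bdry2:
  fixes f :: "nat \<Rightarrow> real"
  assumes fz: "\<And>x. x \<le> x0 \<Longrightarrow> f x = 0" and fs: "\<And>x. x \<noteq> x0 \<Longrightarrow> f (Suc x) = lam * f x"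
    and lam: "0 < lam" and f1: "0 \<le> f (Suc x0)"
    and lpow: "\<And>i. i \<le> M \<Longrightarrow> 1/2 \<le> lam ^ i"
    and eta: "0 \<le> \<eta>" "real M * \<eta> \<le> 1/2" and M: "0 < M" and xr: "x0 + M \<le> r"
    and h: "\<And>i. i < M \<Longrightarrow> (1 - \<eta>) * W K B r (x0 + i) \<le> W K B r (x0 + i + 1)"
  shows "W K B r x0 * f (Suc x0) \<le> 4 / real M * SS K B f r 0"
proof -
  have nn: "\<And>x. 0 \<le> f x" by (rule shape_nonneg[OF fz fs lam f1])
  have M1: "1 \<le> real M" using M by simp
  have "1 * \<eta> \<le> real M * \<eta>" by (rule mult_right_mono[OF M1 eta(1)])
  hence eta1: "\<eta> \<le> 1" using eta by simp
  have "real M * (1/4 * (W K B r x0 * f (Suc x0))) = (\<Sum>i\<in>{1..M}. 1/4 * (W K B r x0 * f (Suc x0)))" by simp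
  also have "\<dots> \<le> (\<Sum>i\<in>{1..M}. W K B r (x0 + i) * f (x0 + i))"
  proof (rule sum_mono)
    fix i assume i: "i \<in> {1..M}"
    have "real i * \<eta> \<le> real M * \<eta>" using i eta by (intro mult_right_mono) auto
    hence "1/2 \<le> 1 - real i * \<eta>" using eta by simp
    also have "\<dots> \<le> (1 - \<eta>) ^ i" using Bernoulli_inequality[of "- \<eta>" i] eta1 by simp
    finally have p: "1/2 \<le> (1 - \<eta>) ^ i" .
    have "1/2 * W K B r x0 \<le> (1 - \<eta>) ^ i * W K B r x0" by (rule mult_right_mono[OF p W_nonneg])
    also have "\<dots> \<le> W K B r (x0 + i)" using geo_W[OF eta(1) eta1 h] i by auto
    finally have q: "1/2 * W K B r x0 \<le> W K B r (x0 + i)" .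
    obtain i' where i': "i = Suc i'" using i by (cases i) auto
    have fi: "f (x0 + i) = lam ^ i' * f (Suc x0)" using shape_pow[of x0 f lam i', OF fs] i' by simp
    have "1/2 * f (Suc x0) \<le> lam ^ i' * f (Suc x0)"
      by (rule mult_right_mono[OF lpow f1]) (use i i' in auto)
    hence fm: "1/2 * f (Suc x0) \<le> f (x0 + i)" using fi by simp
    have "1/4 * (W K B r x0 * f (Suc x0)) = (1/2 * W K B r x0) * (1/2 * f (Suc x0))" by simp
    also have "\<dots> \<le> W K B r (x0 + i) * f (x0 + i)"
      by (rule mult_mono[OF q fm]) (auto simp: W_nonneg nn f1)
    finally show "1/4 * (W K B r x0 * f (Suc x0)) \<le> W K B r (x0 + i) * f (x0 + i)" .
  qed
  also have "\<dots> = (\<Sum>x\<in>(\<lambda>i. x0 + i) ` {1..M}. W K B r x * f x)"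
    by (subst sum.reindex) (auto simp: inj_on_def)
  also have "\<dots> \<le> (\<Sum>x\<le>r. W K B r x * f x)"
    by (rule sum_mono2) (use xr in \<open>auto intro: mult_nonneg_nonneg W_nonneg nn\<close>)
  also have "\<dots> = SS K B f r 0" unfolding SS_def by simp
  finally have Bd: "real M * (1/4 * (W K B r x0 * f (Suc x0))) \<le> SS K B f r 0" .
  thus ?thesis using M by (simp add: field_simps)
qed

lemma step2:
  fixes f :: "nat \<Rightarrow> real"
  assumes fz: "\<And>x. x \<le> x0 \<Longrightarrow> f x = 0" and fs: "\<And>x. x \<noteq> x0 \<Longrightarrow> f (Suc x) = lam * f x"
    and lam: "0 < lam" and f1: "0 \<le> f (Suc x0)"
    and r: "r < K + B" and x0r: "x0 \<le> r"
    and bd: "W K B r x0 * f (Suc x0) \<le> e0 * SS K B f r 0"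
  shows "\<bar>PP K B f (Suc r) 0 - PP K B f r 0\<bar> \<le> real K / real (K + B - r) * (\<bar>lam - 1\<bar> + e0) * PP K B f r 0"
proof -
  have nn: "\<And>x. 0 \<le> f x" by (rule shape_nonneg[OF fz fs lam f1])
  define N where "N = K + B"
  define D where "D = (\<Sum>x\<le>r. W K B r x * real (K - x) * (f (x + 0 + 1) - f (x + 0)))"
  have dec: "real (Suc r) * SS K B f (Suc r) 0 = real (N - r) * SS K B f r 0 + D"
    unfolding N_def D_def by (rule step_decomp[OF r])
  have df: "\<bar>f (x + 1) - f x\<bar> \<le> \<bar>lam - 1\<bar> * f x + (if x = x0 then f (Suc x0) else 0)" for x
  proof (cases "x = x0")
    case True thus ?thesis using fz[of x0] f1 by simp
  next
    case False
    hence "f (x + 1) - f x = (lam - 1) * f x" using fs[of x] by (simp add: algebra_simps)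
    thus ?thesis using False nn[of x] by (simp add: abs_mult)
  qed
  have D1: "\<bar>D\<bar> \<le> real K * (\<bar>lam - 1\<bar> * SS K B f r 0 + W K B r x0 * f (Suc x0))"
  proof -
    have "\<bar>D\<bar> \<le> (\<Sum>x\<le>r. \<bar>W K B r x * real (K - x) * (f (x + 0 + 1) - f (x + 0))\<bar>)"
      unfolding D_def by (rule sum_abs)
    also have "\<dots> \<le> (\<Sum>x\<le>r. real K * (W K B r x * (\<bar>lam - 1\<bar> * f x + (if x = x0 then f (Suc x0) else 0))))"
    proof (rule sum_mono)
      fix x assume "x \<in> {..r}"
      have "\<bar>W K B r x * real (K - x) * (f (x + 0 + 1) - f (x + 0))\<bar> = W K B r x * real (K - x) * \<bar>f (x + 1) - f x\<bar>"
        by (simp add: abs_mult W_nonneg)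
      also have "\<dots> \<le> W K B r x * real K * (\<bar>lam - 1\<bar> * f x + (if x = x0 then f (Suc x0) else 0))"
        by (intro mult_mono df) (auto simp: W_nonneg)
      finally show "\<bar>W K B r x * real (K - x) * (f (x + 0 + 1) - f (x + 0))\<bar> \<le> real K * (W K B r x * (\<bar>lam - 1\<bar> * f x + (if x = x0 then f (Suc x0) else 0)))"
        by (simp add: algebra_simps)
    qed
    also have "\<dots> = real K * ((\<Sum>x\<le>r. \<bar>lam - 1\<bar> * (W K B r x * f (x + 0))) + (\<Sum>x\<le>r. if x = x0 then W K B r x0 * f (Suc x0) else 0))"
      unfolding sum.distrib[symmetric] sum_distrib_left by (rule sum.cong) (auto simp: algebra_simps)
    also have "\<dots> = real K * (\<bar>lam - 1\<bar> * SS K B f r 0 + W K B r x0 * f (Suc x0))"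
      using x0r by (simp add: SS_def sum_distrib_left)
    finally show ?thesis .
  qed
  have D2: "\<bar>D\<bar> \<le> real K * (\<bar>lam - 1\<bar> + e0) * SS K B f r 0"
    using D1 bd by (smt (verit) distrib_right mult_left_mono of_nat_0_le_iff mult.assoc)
  have Cpos: "real (N choose r) > 0" using r unfolding N_def by simp
  have Nr: "real (N - r) > 0" using r unfolding N_def by simp
  have key: "PP K B f (Suc r) 0 - PP K B f r 0 = D / (real (N - r) * real (N choose r))"
  proof -
    have "SS K B f (Suc r) 0 / real (N choose Suc r) = (real (Suc r) * SS K B f (Suc r) 0) / (real (N choose Suc r) * real (Suc r))"
      by simp
    also have "\<dots> = (real (N - r) * SS K B f r 0 + D) / (real (N choose r) * real (N - r))"
      unfolding dec binom_N ..
    also have "\<dots> = SS K B f r 0 / real (N choose r) + D / (real (N - r) * real (N choose r))"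
      using Cpos Nr by (simp add: field_simps)
    finally show ?thesis unfolding PP_def N_def by simp
  qed
  have "\<bar>PP K B f (Suc r) 0 - PP K B f r 0\<bar> = \<bar>D\<bar> / (real (N - r) * real (N choose r))"
    unfolding key using Cpos Nr by (simp add: abs_divide)
  also have "\<dots> \<le> real K * (\<bar>lam - 1\<bar> + e0) * SS K B f r 0 / (real (N - r) * real (N choose r))"
    using D2 Cpos Nr by (intro divide_right_mono) auto
  also have "\<dots> = real K / real (N - r) * (\<bar>lam - 1\<bar> + e0) * PP K B f r 0"
    unfolding PP_def N_def[symmetric] using Cpos Nr by (simp add: field_simps)
  finally show ?thesis unfolding N_def .
qed

lemma iter2:
  assumes nn: "\<And>r. 0 \<le> PP K B f r 0" and g: "0 \<le> \<gamma>" "\<gamma> \<le> 1"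
    and hs: "\<And>r. r0 \<le> r \<Longrightarrow> r < r1 \<Longrightarrow> \<bar>PP K B f (Suc r) 0 - PP K B f r 0\<bar> \<le> \<gamma> * PP K B f r 0"
  shows "\<And>i. r0 + i \<le> r1 \<Longrightarrow> (1 - \<gamma>) ^ i * PP K B f r0 0 \<le> PP K B f (r0 + i) 0 \<and> PP K B f (r0 + i) 0 \<le> (1 + \<gamma>) ^ i * PP K B f r0 0"
proof -
  fix i show "r0 + i \<le> r1 \<Longrightarrow> (1 - \<gamma>) ^ i * PP K B f r0 0 \<le> PP K B f (r0 + i) 0 \<and> PP K B f (r0 + i) 0 \<le> (1 + \<gamma>) ^ i * PP K B f r0 0"
  proof (induction i)
    case 0 thus ?case by simp
  next
    case (Suc i)
    have IH: "(1 - \<gamma>) ^ i * PP K B f r0 0 \<le> PP K B f (r0 + i) 0" "PP K B f (r0 + i) 0 \<le> (1 + \<gamma>) ^ i * PP K B f r0 0"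
      using Suc by auto
    have h: "\<bar>PP K B f (Suc (r0 + i)) 0 - PP K B f (r0 + i) 0\<bar> \<le> \<gamma> * PP K B f (r0 + i) 0"
      using hs[of "r0 + i"] Suc.prems by auto
    have lo: "(1 - \<gamma>) * PP K B f (r0 + i) 0 \<le> PP K B f (r0 + Suc i) 0" using h by (simp add: algebra_simps abs_le_iff)
    have hi: "PP K B f (r0 + Suc i) 0 \<le> (1 + \<gamma>) * PP K B f (r0 + i) 0" using h by (simp add: algebra_simps abs_le_iff)
    have "(1 - \<gamma>) ^ Suc i * PP K B f r0 0 = (1 - \<gamma>) * ((1 - \<gamma>) ^ i * PP K B f r0 0)" by simp
    also have "\<dots> \<le> (1 - \<gamma>) * PP K B f (r0 + i) 0" using IH(1) g by (intro mult_left_mono) auto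
    also have "\<dots> \<le> PP K B f (r0 + Suc i) 0" by (rule lo)
    finally have A: "(1 - \<gamma>) ^ Suc i * PP K B f r0 0 \<le> PP K B f (r0 + Suc i) 0" .
    have "PP K B f (r0 + Suc i) 0 \<le> (1 + \<gamma>) * PP K B f (r0 + i) 0" by (rule hi)
    also have "\<dots> \<le> (1 + \<gamma>) * ((1 + \<gamma>) ^ i * PP K B f r0 0)" using IH(2) g by (intro mult_left_mono) auto
    finally have B: "PP K B f (r0 + Suc i) 0 \<le> (1 + \<gamma>) ^ Suc i * PP K B f r0 0" by simp
    show ?case using A B by simp
  qed
qed


lemma f_shape:
  fixes mu0 sg aa tt :: real
  assumes sg: "0 < sg" and th: "0 < mu0 + tt * sg"
  defines "f \<equiv> (\<lambda>d::nat. exp (aa * ((real d - mu0) / sg)) * (if tt \<le> (real d - mu0) / sg then 1 else 0))"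
  defines "x0 \<equiv> nat \<lceil>mu0 + tt * sg\<rceil> - 1"
  shows "real x0 < mu0 + tt * sg" "mu0 + tt * sg \<le> real x0 + 1"
    "\<And>x. x \<le> x0 \<Longrightarrow> f x = 0"
    "\<And>x. x \<noteq> x0 \<Longrightarrow> f (Suc x) = exp (aa / sg) * f x"
    "0 < f (Suc x0)"
proof -
  let ?th = "mu0 + tt * sg"
  have c1: "1 \<le> \<lceil>?th\<rceil>" using th by linarith
  have n1: "1 \<le> nat \<lceil>?th\<rceil>" using c1 by linarith
  have "real x0 = real (nat \<lceil>?th\<rceil>) - 1" unfolding x0_def using n1 by (simp add: of_nat_diff)
  also have "real (nat \<lceil>?th\<rceil>) = real_of_int \<lceil>?th\<rceil>" using c1 by simp
  finally have rx: "real x0 = real_of_int \<lceil>?th\<rceil> - 1" .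
  show A: "real x0 < ?th" using rx by linarith
  show B: "?th \<le> real x0 + 1" using rx by linarith
  have iff: "tt \<le> (real d - mu0) / sg \<longleftrightarrow> ?th \<le> real d" for d
    using sg by (simp add: pos_le_divide_eq algebra_simps)
  show "\<And>x. x \<le> x0 \<Longrightarrow> f x = 0"
  proof -
    fix x assume "x \<le> x0"
    hence "real x < ?th" using A by linarith
    thus "f x = 0" unfolding f_def using iff[of x] by simp
  qed
  show "\<And>x. x \<noteq> x0 \<Longrightarrow> f (Suc x) = exp (aa / sg) * f x"
  proof -
    fix x assume x: "x \<noteq> x0"
    show "f (Suc x) = exp (aa / sg) * f x"
    proof (cases "x < x0")
      case True
      hence "real (Suc x) < ?th" "real x < ?th" using A by linarith+
      thus ?thesis unfolding f_def using iff[of x] iff[of "Suc x"] by simp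
    next
      case False
      hence "x0 + 1 \<le> x" using x by simp
      hence "?th \<le> real x" "?th \<le> real (Suc x)" using B by linarith+
      moreover have "exp (aa * ((real (Suc x) - mu0) / sg)) = exp (aa / sg) * exp (aa * ((real x - mu0) / sg))"
        using sg by (simp add: exp_add[symmetric] field_simps)
      ultimately show ?thesis unfolding f_def using iff[of x] iff[of "Suc x"] by simp
    qed
  qed
  have "?th \<le> real (Suc x0)" using B by simp
  thus "0 < f (Suc x0)" unfolding f_def using iff[of "Suc x0"] by simp
qed

lemma N_split: "2 \<le> n \<Longrightarrow> (n - 1) choose 2 = (n - 2) + ((n - 2) choose 2)"
proof -
  assume "2 \<le> n"
  hence a: "n - 1 = Suc (n - 2)" by simp
  have "Suc (n - 2) choose Suc 1 = ((n - 2) choose 1) + ((n - 2) choose Suc 1)" by (rule binomial_Suc_Suc)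
  thus ?thesis unfolding a by (simp add: numeral_2_eq_2)
qed

lemma SS_sumR:
  fixes f :: "nat \<Rightarrow> real"
  shows "(\<Sum>R\<in>{R. R \<subseteq> rest1 n \<and> card R = r}. f (deg R 2)) = SS (n - 2) ((n - 2) choose 2) f r 0"
  unfolding sumR SS_def W_def by simp

lemma graph_bounds:
  fixes f :: "nat \<Rightarrow> real"
  assumes fz: "\<And>x. x \<le> x0 \<Longrightarrow> f x = 0" and fs: "\<And>x. x \<noteq> x0 \<Longrightarrow> f (Suc x) = lam * f x"
    and lam: "0 < lam" and f1: "0 \<le> f (Suc x0)" and j: "j \<le> mm" and x0r: "x0 \<le> mm - j"
  shows "min 1 lam * real (n - 1 choose j) * SS (n - 2) ((n - 2) choose 2) f (mm - j) 0
           \<le> (\<Sum>E\<in>{E \<in> Gnm n mm. deg E 1 = j}. f (deg E 2))"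
    "(\<Sum>E\<in>{E \<in> Gnm n mm. deg E 1 = j}. f (deg E 2)) \<le>
       real (n - 1 choose j) * (max 1 lam * SS (n - 2) ((n - 2) choose 2) f (mm - j) 0
         + W (n - 2) ((n - 2) choose 2) (mm - j) x0 * f (Suc x0))"
proof -
  have nn: "\<And>x. 0 \<le> f x" by (rule shape_nonneg[OF fz fs lam f1])
  have pw: "min 1 lam * f (deg (E \<inter> rest1 n) 2) \<le> f (deg E 2)
        \<and> f (deg E 2) \<le> max 1 lam * f (deg (E \<inter> rest1 n) 2) + (if deg (E \<inter> rest1 n) 2 = x0 then f (Suc x0) else 0)"
    if E: "E \<in> {E \<in> Gnm n mm. deg E 1 = j}" for E
  proof -
    have Ea: "E \<subseteq> all_edges n" using E unfolding Gnm_def by auto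
    define d where "d = deg (E \<inter> rest1 n) 2"
    have "d \<le> deg E 2" "deg E 2 \<le> d + 1" using deg2_bounds[OF Ea] unfolding d_def by auto
    hence cases: "deg E 2 = d \<or> deg E 2 = Suc d" by auto
    have lo: "min 1 lam * f d \<le> f (Suc d)"
    proof (cases "d = x0")
      case True thus ?thesis using fz[of x0] nn by simp
    next
      case False thus ?thesis using fs[of d] nn[of d] by (simp add: mult_right_mono)
    qed
    have hi: "f (Suc d) \<le> max 1 lam * f d + (if d = x0 then f (Suc x0) else 0)"
    proof (cases "d = x0")
      case True thus ?thesis using fz[of x0] by simp
    next
      case False thus ?thesis using fs[of d] nn[of d] by (simp add: mult_right_mono)
    qed
    have m01: "0 \<le> min 1 lam" "min 1 lam \<le> 1" "1 \<le> max 1 lam" using lam by auto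
    have lo0: "min 1 lam * f d \<le> f d" by (rule mult_left_le_one_le[OF nn m01(1,2)])
    have "f d = 1 * f d" by simp
    also have "\<dots> \<le> max 1 lam * f d" by (rule mult_right_mono[OF m01(3) nn])
    finally have hi00: "f d \<le> max 1 lam * f d" .
    have ite0: "0 \<le> (if d = x0 then f (Suc x0) else 0)" using f1 by simp
    have hi0: "f d \<le> max 1 lam * f d + (if d = x0 then f (Suc x0) else 0)" using hi00 ite0 by linarith
    show ?thesis
    proof (cases "deg E 2 = d")
      case True thus ?thesis using lo0 hi0 unfolding d_def by simp
    next
      case False hence "deg E 2 = Suc d" using cases by simp
      thus ?thesis using lo hi unfolding d_def by simp
    qed
  qed
  have fin: "finite {E \<in> Gnm n mm. deg E 1 = j}"
    by (rule finite_subset[of _ "Pow (all_edges n)"]) (auto simp: Gnm_def finite_all_edges)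
  have "min 1 lam * real (n - 1 choose j) * SS (n - 2) ((n - 2) choose 2) f (mm - j) 0
      = (\<Sum>E\<in>{E \<in> Gnm n mm. deg E 1 = j}. (\<lambda>R. min 1 lam * f (deg R 2)) (E \<inter> rest1 n))"
  proof -
    have "(\<Sum>E\<in>{E \<in> Gnm n mm. deg E 1 = j}. (\<lambda>R. min 1 lam * f (deg R 2)) (E \<inter> rest1 n))
       = real (n - 1 choose j) * (\<Sum>R\<in>{R. R \<subseteq> rest1 n \<and> card R = mm - j}. min 1 lam * f (deg R 2))"
      by (rule sum_j[OF j])
    also have "\<dots> = real (n - 1 choose j) * (min 1 lam * (\<Sum>R\<in>{R. R \<subseteq> rest1 n \<and> card R = mm - j}. f (deg R 2)))"
      by (simp only: sum_distrib_left)
    also have "\<dots> = min 1 lam * real (n - 1 choose j) * SS (n - 2) ((n - 2) choose 2) f (mm - j) 0"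
      unfolding SS_sumR by simp
    finally show ?thesis by simp
  qed
  also have "\<dots> \<le> (\<Sum>E\<in>{E \<in> Gnm n mm. deg E 1 = j}. f (deg E 2))"
    by (rule sum_mono) (use pw in auto)
  finally show "min 1 lam * real (n - 1 choose j) * SS (n - 2) ((n - 2) choose 2) f (mm - j) 0
           \<le> (\<Sum>E\<in>{E \<in> Gnm n mm. deg E 1 = j}. f (deg E 2))" .
  have "(\<Sum>E\<in>{E \<in> Gnm n mm. deg E 1 = j}. f (deg E 2)) \<le>
      (\<Sum>E\<in>{E \<in> Gnm n mm. deg E 1 = j}. (\<lambda>R. max 1 lam * f (deg R 2) + (if deg R 2 = x0 then f (Suc x0) else 0)) (E \<inter> rest1 n))"
    by (rule sum_mono) (use pw in auto)
  also have "\<dots> = real (n - 1 choose j) * (\<Sum>R\<in>{R. R \<subseteq> rest1 n \<and> card R = mm - j}. (\<lambda>x. max 1 lam * f x + (if x = x0 then f (Suc x0) else 0)) (deg R 2))"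
    by (rule sum_j[OF j])
  also have "(\<Sum>R\<in>{R. R \<subseteq> rest1 n \<and> card R = mm - j}. (\<lambda>x. max 1 lam * f x + (if x = x0 then f (Suc x0) else 0)) (deg R 2))
     = SS (n - 2) ((n - 2) choose 2) (\<lambda>x. max 1 lam * f x + (if x = x0 then f (Suc x0) else 0)) (mm - j) 0"
    by (rule SS_sumR)
  also have "\<dots> = max 1 lam * SS (n - 2) ((n - 2) choose 2) f (mm - j) 0 + W (n - 2) ((n - 2) choose 2) (mm - j) x0 * f (Suc x0)"
  proof -
    have "SS (n - 2) ((n - 2) choose 2) (\<lambda>x. max 1 lam * f x + (if x = x0 then f (Suc x0) else 0)) (mm - j) 0
      = (\<Sum>x\<le>mm - j. max 1 lam * (W (n - 2) ((n - 2) choose 2) (mm - j) x * f (x + 0))) +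
        (\<Sum>x\<le>mm - j. if x = x0 then W (n - 2) ((n - 2) choose 2) (mm - j) x0 * f (Suc x0) else 0)"
      unfolding SS_def sum.distrib[symmetric] by (rule sum.cong) (auto simp: algebra_simps)
    also have "\<dots> = max 1 lam * SS (n - 2) ((n - 2) choose 2) f (mm - j) 0 + W (n - 2) ((n - 2) choose 2) (mm - j) x0 * f (Suc x0)"
      using x0r by (simp add: SS_def sum_distrib_left)
    finally show ?thesis .
  qed
  finally show "(\<Sum>E\<in>{E \<in> Gnm n mm. deg E 1 = j}. f (deg E 2)) \<le>
       real (n - 1 choose j) * (max 1 lam * SS (n - 2) ((n - 2) choose 2) f (mm - j) 0
         + W (n - 2) ((n - 2) choose 2) (mm - j) x0 * f (Suc x0))" .
qed


lemma ratio_bound: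
  fixes Lb Ub x y :: real
  assumes "0 < Lb" "Lb \<le> x" "x \<le> Ub" "Lb \<le> y" "y \<le> Ub"
  shows "\<bar>x / y - 1\<bar> \<le> Ub / Lb - 1"
proof -
  have y0: "0 < y" using assms by linarith
  have U0: "0 < Ub" using assms by linarith
  have up: "x / y \<le> Ub / Lb"
    using assms y0 by (intro frac_le) auto
  have lo: "Lb / Ub \<le> x / y"
    using assms y0 U0 by (intro frac_le) auto
  have "2 - Ub / Lb \<le> Lb / Ub"
  proof -
    define q where "q = Ub / Lb"
    have q0: "0 < q" unfolding q_def using assms U0 by simp
    have "Lb / Ub = 1 / q" unfolding q_def by simp
    moreover have "2 - q \<le> 1 / q"
    proof -
      have "(2 - q) * q = 1 - (q - 1)^2" by (simp add: power2_eq_square algebra_simps)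
      hence "(2 - q) * q \<le> 1" by simp
      thus ?thesis using q0 by (simp add: pos_le_divide_eq)
    qed
    ultimately show ?thesis unfolding q_def by simp
  qed
  thus ?thesis using up lo by (simp add: abs_le_iff)
qed


lemma core:
  fixes n mm M :: nat and kk tt :: real
  fixes muO sg aa lam th X \<eta> \<gamma> :: real and K B rO :: nat and F :: "nat set set \<Rightarrow> real"
  assumes muO_def: "muO = mu n mm" and sg_def: "sg = sigma n mm"
  and aa_def: "aa = kk * sg / muO"
  and lam_def: "lam = exp (aa / sg)" and th_def: "th = muO + tt * sg"
  and K_def: "K = n - 2" and B_def: "B = (n - 2) choose 2" and rO_def: "rO = mm - (n - 1)"
  and X_def: "X = th + real M" and \<eta>_def: "\<eta> = 1 / (2 * real M)"
  and \<gamma>_def: "\<gamma> = real K / real (K + B - mm) * (\<bar>lam - 1\<bar> + 4 / real M)"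
  and F_def: "F = (\<lambda>E. exp (aa * Ydeg n mm E 2) * (if Ydeg n mm E 2 \<ge> tt then 1 else 0))"
  and n4: "4 \<le> n" and nm: "n \<le> mm" and mB: "mm \<le> B" and sg0: "0 < sg" and th0: "0 < th" and M0: "0 < M"
    and XK: "X \<le> real K" and Xr: "X \<le> real rO"
    and Xq: "(1 - \<eta>) * X * (real B + X) \<le> (real K - X) * (real rO - X)"
    and lpow: "\<And>i. i \<le> M \<Longrightarrow> 1/2 \<le> lam ^ i" and g1: "\<gamma> < 1"
  shows "Sup ((\<lambda>j. \<bar>Gcondexp n mm F (\<lambda>E. deg E 1 = j) / Gexp n mm F - 1\<bar>)
                      ` {j. j < n \<and> Gprob n mm (\<lambda>E. deg E 1 = j) > 0})
         \<le> (max 1 lam + 4 / real M) * (1 + \<gamma>) ^ (n - 1) / (min 1 lam * (1 - \<gamma>) ^ (n - 1)) - 1"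
    and "0 \<le> Sup ((\<lambda>j. \<bar>Gcondexp n mm F (\<lambda>E. deg E 1 = j) / Gexp n mm F - 1\<bar>)
                      ` {j. j < n \<and> Gprob n mm (\<lambda>E. deg E 1 = j) > 0})"
proof -
  define f where "f \<equiv> (\<lambda>d::nat. exp (aa * ((real d - muO) / sg)) * (if tt \<le> (real d - muO) / sg then 1 else 0))"
  define x0 where "x0 \<equiv> nat \<lceil>muO + tt * sg\<rceil> - 1"
  have th': "0 < muO + tt * sg" using th0 unfolding th_def .
  have fz: "\<And>x. x \<le> x0 \<Longrightarrow> f x = 0"
    using f_shape(3)[OF sg0 th', where aa=aa] unfolding f_def x0_def by simp
  have fs: "\<And>x. x \<noteq> x0 \<Longrightarrow> f (Suc x) = lam * f x"
    using f_shape(4)[OF sg0 th', where aa=aa] unfolding f_def x0_def lam_def by simp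
  have f1p: "0 < f (Suc x0)"
    using f_shape(5)[OF sg0 th', where aa=aa] unfolding f_def x0_def by simp
  hence f1: "0 \<le> f (Suc x0)" by simp
  have x0th: "real x0 < th" using f_shape(1)[OF sg0 th'] unfolding x0_def th_def by simp
  have lam0: "0 < lam" unfolding lam_def by simp
  have nn: "\<And>x. 0 \<le> f x" by (rule shape_nonneg[OF fz fs lam0 f1])
  define N where "N = K + B"
  have NB: "(n - 1) choose 2 = N" unfolding N_def K_def B_def using n4 by (intro N_split) simp
  have M1: "1 \<le> real M" using M0 by simp
  have eta0: "0 \<le> \<eta>" and eta12: "real M * \<eta> = 1/2" and eta1: "\<eta> \<le> 1/2"
    unfolding \<eta>_def using M1 by (auto simp: field_simps)
  have K2: "2 \<le> K" unfolding K_def using n4 by simp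
  have mN: "mm + 2 \<le> N" unfolding N_def using mB K2 by simp
  have rOmm: "rO + (n - 1) = mm" unfolding rO_def using nm by simp
  have x0M: "x0 + M < rO" using x0th Xr unfolding X_def by linarith
  have x0K: "x0 + 1 < K" using x0th XK M1 unfolding X_def by linarith
  have hW: "(1 - \<eta>) * W K B r (x0 + i) \<le> W K B r (x0 + i + 1)" if r: "rO \<le> r" and i: "i < M" for r i
  proof -
    define x where "x = x0 + i"
    have xX: "real x + 1 < X" unfolding x_def X_def using x0th i by linarith
    have xr: "x < r" using xX Xr r by linarith
    have xK: "x < K" using xX XK by linarith
    have RW: "W K B r x * (real (K - x) * real (r - x)) \<le> W K B r (Suc x) * (real (Suc x) * (real B + real x + 1))"
      by (rule ratio_W[OF xr])
    have c1: "real (Suc x) * (real B + real x + 1) \<le> X * (real B + X)"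
      using xX by (intro mult_mono) auto
    have c2: "(real K - X) * (real rO - X) \<le> real (K - x) * real (r - x)"
      using xX xK xr XK Xr r by (intro mult_mono) (auto simp: of_nat_diff)
    have "(1 - \<eta>) * (real (Suc x) * (real B + real x + 1)) \<le> (1 - \<eta>) * (X * (real B + X))"
      using c1 eta1 by (intro mult_left_mono) auto
    also have "\<dots> \<le> real (K - x) * real (r - x)" using Xq c2 by (simp add: mult.assoc)
    finally have c3: "(1 - \<eta>) * (real (Suc x) * (real B + real x + 1)) \<le> real (K - x) * real (r - x)" .
    have "((1 - \<eta>) * W K B r x) * (real (Suc x) * (real B + real x + 1)) = W K B r x * ((1 - \<eta>) * (real (Suc x) * (real B + real x + 1)))"
      by simp
    also have "\<dots> \<le> W K B r x * (real (K - x) * real (r - x))" using c3 by (intro mult_left_mono W_nonneg)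
    also have "\<dots> \<le> W K B r (Suc x) * (real (Suc x) * (real B + real x + 1))" by (rule RW)
    finally have "((1 - \<eta>) * W K B r x) * (real (Suc x) * (real B + real x + 1)) \<le> W K B r (Suc x) * (real (Suc x) * (real B + real x + 1))" .
    moreover have "0 < real (Suc x) * (real B + real x + 1)" by simp
    ultimately have "(1 - \<eta>) * W K B r x \<le> W K B r (Suc x)" by (rule mult_right_le_imp_le)
    thus ?thesis unfolding x_def by simp
  qed
  have bd: "W K B r x0 * f (Suc x0) \<le> 4 / real M * SS K B f r 0" if r: "rO \<le> r" for r
    by (rule bdry2[OF fz fs lam0 f1 lpow eta0 _ M0 _ hW[OF r]]) (use eta12 x0M r in auto)
  have g0: "0 \<le> \<gamma>" unfolding \<gamma>_def by (intro mult_nonneg_nonneg divide_nonneg_nonneg) auto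
  have PPnn: "\<And>r. 0 \<le> PP K B f r 0" unfolding PP_def by (intro divide_nonneg_nonneg SS_nonneg nn) auto
  have stp: "\<bar>PP K B f (Suc r) 0 - PP K B f r 0\<bar> \<le> \<gamma> * PP K B f r 0" if r: "rO \<le> r" "r < mm" for r
  proof -
    have rN: "r < K + B" using r mN unfolding N_def by simp
    have "\<bar>PP K B f (Suc r) 0 - PP K B f r 0\<bar> \<le> real K / real (K + B - r) * (\<bar>lam - 1\<bar> + 4 / real M) * PP K B f r 0"
      by (rule step2[OF fz fs lam0 f1 rN _ bd[OF r(1)]]) (use x0M r in auto)
    also have "\<dots> \<le> \<gamma> * PP K B f r 0"
    proof -
      have a: "real (K + B - mm) \<le> real (K + B - r)" using r by simp
      have b: "0 < real (K + B - mm)" using mN unfolding N_def by simp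
      have q: "real K / real (K + B - r) \<le> real K / real (K + B - mm)"
      proof (rule divide_left_mono[OF a])
        show "0 < real (K + B - r) * real (K + B - mm)" using b a by (intro mult_pos_pos) linarith+
      qed simp
      show ?thesis unfolding \<gamma>_def
        by (intro mult_right_mono[OF mult_right_mono[OF q]] PPnn) auto
    qed
    finally show ?thesis .
  qed
  have itr: "(1 - \<gamma>) ^ i * PP K B f rO 0 \<le> PP K B f (rO + i) 0 \<and> PP K B f (rO + i) 0 \<le> (1 + \<gamma>) ^ i * PP K B f rO 0"
    if "rO + i \<le> mm" for i
    by (rule iter2[OF PPnn g0 _ stp that]) (use g1 in auto)
  define P0 where "P0 = PP K B f rO 0"
  define Lb where "Lb = min 1 lam * (1 - \<gamma>) ^ (n - 1) * P0"
  define Ub where "Ub = (max 1 lam + 4 / real M) * (1 + \<gamma>) ^ (n - 1) * P0"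
  have Cpos: "0 < real (N choose r)" if "r \<le> mm" for r using that mN by simp
  have PPr: "(1 - \<gamma>) ^ (n - 1) * P0 \<le> PP K B f r 0 \<and> PP K B f r 0 \<le> (1 + \<gamma>) ^ (n - 1) * P0"
    if r: "rO \<le> r" "r \<le> mm" for r
  proof -
    obtain i where i: "r = rO + i" using r by (metis le_add_diff_inverse)
    have ii: "i \<le> n - 1" using i r rOmm by simp
    have P00: "0 \<le> P0" unfolding P0_def by (rule PPnn)
    have A: "(1 - \<gamma>) ^ (n - 1) \<le> (1 - \<gamma>) ^ i" by (rule power_decreasing[OF ii]) (use g0 g1 in auto)
    have Bq: "(1 + \<gamma>) ^ i \<le> (1 + \<gamma>) ^ (n - 1)" by (rule power_increasing[OF ii]) (use g0 in auto)
    have "(1 - \<gamma>) ^ (n - 1) * P0 \<le> (1 - \<gamma>) ^ i * P0" by (rule mult_right_mono[OF A P00])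
    moreover have "(1 + \<gamma>) ^ i * P0 \<le> (1 + \<gamma>) ^ (n - 1) * P0" by (rule mult_right_mono[OF Bq P00])
    ultimately show ?thesis using itr[of i] i r unfolding P0_def by auto
  qed
  have P0p: "0 < P0"
  proof -
    have Wp: "0 < W K B rO (Suc x0)" unfolding W_def using x0K x0M mB rOmm by simp
    have "0 < W K B rO (Suc x0) * f (Suc x0 + 0)" using Wp f1p by simp
    also have "\<dots> \<le> SS K B f rO 0" unfolding SS_def
      by (rule member_le_sum) (use x0M nn in \<open>auto intro: mult_nonneg_nonneg W_nonneg\<close>)
    finally have "0 < SS K B f rO 0" .
    thus ?thesis unfolding P0_def PP_def N_def[symmetric] using Cpos[of rO] rOmm by simp
  qed
  have Lbp: "0 < Lb" unfolding Lb_def using P0p g1 lam0 by simp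
  define A where "A = (\<lambda>j. {E \<in> Gnm n mm. deg E 1 = j})"
  have FE: "F E = f (deg E 2)" for E unfolding F_def f_def Ydeg_def muO_def sg_def by simp
  have finG: "finite (Gnm n mm)"
    by (rule finite_subset[of _ "Pow (all_edges n)"]) (auto simp: Gnm_def finite_all_edges)
  have cntA: "card (A j) = (n - 1 choose j) * (N choose (mm - j))" if "j < n" for j
    unfolding A_def NB[symmetric] using that nm by (intro count_j) simp
  have Sj: "real (card (A j)) * Lb \<le> (\<Sum>E\<in>A j. F E) \<and> (\<Sum>E\<in>A j. F E) \<le> real (card (A j)) * Ub"
    if j: "j < n" for j
  proof -
    define r where "r = mm - j"
    have jm: "j \<le> mm" using j nm by simp
    have rr: "rO \<le> r" "r \<le> mm" unfolding r_def rO_def using j by auto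
    have x0r: "x0 \<le> r" using x0M rr by simp
    have SF: "(\<Sum>E\<in>A j. F E) = (\<Sum>E\<in>{E \<in> Gnm n mm. deg E 1 = j}. f (deg E 2))" unfolding A_def FE ..
    have SSP: "SS K B f r 0 = PP K B f r 0 * real (N choose r)"
      unfolding PP_def N_def[symmetric] using Cpos[OF rr(2)] by simp
    have cA: "real (card (A j)) = real (n - 1 choose j) * real (N choose r)"
      unfolding cntA[OF j] r_def by simp
    have x0r': "x0 \<le> mm - j" using x0r unfolding r_def .
    have gb1: "min 1 lam * real (n - 1 choose j) * SS K B f r 0 \<le> (\<Sum>E\<in>{E \<in> Gnm n mm. deg E 1 = j}. f (deg E 2))"
      unfolding r_def K_def B_def by (rule graph_bounds(1)[OF fz fs lam0 f1 jm x0r'])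
    have gb2: "(\<Sum>E\<in>{E \<in> Gnm n mm. deg E 1 = j}. f (deg E 2)) \<le> real (n - 1 choose j) * (max 1 lam * SS K B f r 0 + W K B r x0 * f (Suc x0))"
      unfolding r_def K_def B_def by (rule graph_bounds(2)[OF fz fs lam0 f1 jm x0r'])
    have PPb: "(1 - \<gamma>) ^ (n - 1) * P0 \<le> PP K B f r 0" "PP K B f r 0 \<le> (1 + \<gamma>) ^ (n - 1) * P0"
      using PPr[OF rr] by auto
    have minnn: "0 \<le> min 1 lam" using lam0 by simp
    have "real (card (A j)) * Lb = real (n - 1 choose j) * real (N choose r) * (min 1 lam * ((1 - \<gamma>) ^ (n - 1) * P0))"
      unfolding cA Lb_def by simp
    also have "\<dots> \<le> real (n - 1 choose j) * real (N choose r) * (min 1 lam * PP K B f r 0)"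
      by (intro mult_left_mono PPb(1) minnn) auto
    also have "\<dots> = min 1 lam * real (n - 1 choose j) * SS K B f r 0" unfolding SSP by simp
    also have "\<dots> \<le> (\<Sum>E\<in>A j. F E)" unfolding SF by (rule gb1)
    finally have lo: "real (card (A j)) * Lb \<le> (\<Sum>E\<in>A j. F E)" .
    have "(\<Sum>E\<in>A j. F E) \<le> real (n - 1 choose j) * (max 1 lam * SS K B f r 0 + W K B r x0 * f (Suc x0))"
      unfolding SF by (rule gb2)
    also have "\<dots> \<le> real (n - 1 choose j) * (max 1 lam * SS K B f r 0 + 4 / real M * SS K B f r 0)"
      using bd[OF rr(1)] by (intro mult_left_mono add_left_mono) auto
    also have "\<dots> = real (n - 1 choose j) * real (N choose r) * ((max 1 lam + 4 / real M) * PP K B f r 0)"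
      unfolding SSP by (simp add: algebra_simps)
    also have "\<dots> \<le> real (n - 1 choose j) * real (N choose r) * ((max 1 lam + 4 / real M) * ((1 + \<gamma>) ^ (n - 1) * P0))"
      by (intro mult_left_mono PPb(2)) (auto intro: add_nonneg_nonneg)
    also have "\<dots> = real (card (A j)) * Ub" unfolding cA Ub_def by simp
    finally show ?thesis using lo by simp
  qed
  have img: "(\<lambda>E. deg E 1) ` Gnm n mm \<subseteq> {..<n}"
  proof
    fix y assume "y \<in> (\<lambda>E. deg E 1) ` Gnm n mm"
    then obtain E where E: "E \<in> Gnm n mm" "y = deg E 1" by auto
    have "E \<subseteq> all_edges n" using E unfolding Gnm_def by auto
    hence "y = card (E \<inter> star1 n)" using E deg1_eq by simp
    also have "\<dots> \<le> card (star1 n)" by (intro card_mono finite_star1) auto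
    finally show "y \<in> {..<n}" using card_star1[of n] n4 by simp
  qed
  have sumF: "(\<Sum>E\<in>Gnm n mm. F E) = (\<Sum>j<n. \<Sum>E\<in>A j. F E)"
    unfolding A_def by (rule sum.group[OF finG _ img, symmetric]) simp
  have cardG: "real (card (Gnm n mm)) = (\<Sum>j<n. real (card (A j)))"
  proof -
    have "real (card (Gnm n mm)) = (\<Sum>E\<in>Gnm n mm. (1::real))" by simp
    also have "\<dots> = (\<Sum>j<n. \<Sum>E\<in>A j. (1::real))"
      unfolding A_def by (rule sum.group[OF finG _ img, symmetric]) simp
    finally show ?thesis by simp
  qed
  have A0: "0 < card (A 0)" using cntA[of 0] n4 mN by simp
  have G0: "0 < card (Gnm n mm)"
  proof -
    have "card (A 0) \<le> card (Gnm n mm)" unfolding A_def by (intro card_mono finG) auto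
    thus ?thesis using A0 by simp
  qed
  have GE: "Lb \<le> Gexp n mm F \<and> Gexp n mm F \<le> Ub"
  proof -
    have "real (card (Gnm n mm)) * Lb = (\<Sum>j<n. real (card (A j)) * Lb)" unfolding cardG sum_distrib_right ..
    also have "\<dots> \<le> (\<Sum>E\<in>Gnm n mm. F E)" unfolding sumF by (rule sum_mono) (use Sj in auto)
    finally have l: "real (card (Gnm n mm)) * Lb \<le> (\<Sum>E\<in>Gnm n mm. F E)" .
    have "(\<Sum>E\<in>Gnm n mm. F E) \<le> (\<Sum>j<n. real (card (A j)) * Ub)" unfolding sumF by (rule sum_mono) (use Sj in auto)
    also have "\<dots> = real (card (Gnm n mm)) * Ub" unfolding cardG sum_distrib_right ..
    finally have u: "(\<Sum>E\<in>Gnm n mm. F E) \<le> real (card (Gnm n mm)) * Ub" .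
    show ?thesis unfolding Gexp_def using l u G0 by (simp add: pos_le_divide_eq pos_divide_le_eq mult.commute)
  qed
  define I where "I = {j. j < n \<and> Gprob n mm (\<lambda>E. deg E 1 = j) > 0}"
  have CE: "Lb \<le> Gcondexp n mm F (\<lambda>E. deg E 1 = j) \<and> Gcondexp n mm F (\<lambda>E. deg E 1 = j) \<le> Ub" if j: "j \<in> I" for j
  proof -
    have jn: "j < n" and pr: "Gprob n mm (\<lambda>E. deg E 1 = j) > 0" using j unfolding I_def by auto
    have cp: "0 < card (A j)" using pr unfolding Gprob_def A_def by (cases "card {E \<in> Gnm n mm. deg E 1 = j} = 0") auto
    have e: "Gcondexp n mm F (\<lambda>E. deg E 1 = j) = (\<Sum>E\<in>A j. F E) / real (card (A j))"
      unfolding Gcondexp_def A_def ..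
    show ?thesis unfolding e using Sj[OF jn] cp by (simp add: pos_le_divide_eq pos_divide_le_eq mult.commute)
  qed
  have I0: "0 \<in> I" unfolding I_def Gprob_def using A0 G0 n4 unfolding A_def by simp
  have finI: "finite I" unfolding I_def by (rule finite_subset[of _ "{..<n}"]) auto
  have each: "\<bar>Gcondexp n mm F (\<lambda>E. deg E 1 = j) / Gexp n mm F - 1\<bar> \<le> Ub / Lb - 1" if "j \<in> I" for j
    using CE[OF that] GE Lbp by (intro ratio_bound) auto
  have UL: "Ub / Lb = (max 1 lam + 4 / real M) * (1 + \<gamma>) ^ (n - 1) / (min 1 lam * (1 - \<gamma>) ^ (n - 1))"
    unfolding Ub_def Lb_def using P0p by simp
  show "Sup ((\<lambda>j. \<bar>Gcondexp n mm F (\<lambda>E. deg E 1 = j) / Gexp n mm F - 1\<bar>)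
                      ` {j. j < n \<and> Gprob n mm (\<lambda>E. deg E 1 = j) > 0})
         \<le> (max 1 lam + 4 / real M) * (1 + \<gamma>) ^ (n - 1) / (min 1 lam * (1 - \<gamma>) ^ (n - 1)) - 1"
    unfolding I_def[symmetric] UL[symmetric] by (rule cSup_least) (use I0 each in auto)
  show "0 \<le> Sup ((\<lambda>j. \<bar>Gcondexp n mm F (\<lambda>E. deg E 1 = j) / Gexp n mm F - 1\<bar>)
                      ` {j. j < n \<and> Gprob n mm (\<lambda>E. deg E 1 = j) > 0})"
    unfolding I_def[symmetric]
    by (rule order_trans[OF _ le_cSup_finite[OF finite_imageI[OF finI] imageI[OF I0]]]) simp
qed


lemma choose2_real: "real (n choose 2) = real n * (real n - 1) / 2"
proof (induction n)
  case 0 thus ?case by simp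
next
  case (Suc n)
  have "Suc n choose 2 = n + (n choose 2)" by (metis Suc_1 binomial_Suc_Suc choose_one)
  thus ?case using Suc by (simp add: field_simps)
qed

lemma exp_near1: "\<bar>y::real\<bar> \<le> 1/2 \<Longrightarrow> \<bar>exp y - 1\<bar> \<le> 2 * \<bar>y\<bar>"
proof (cases "0 \<le> y")
  case True
  assume "\<bar>y\<bar> \<le> 1/2"
  hence "exp y \<le> 1 + 2 * y" using True by (intro real_exp_bound_lemma) auto
  moreover have "1 \<le> exp y" using True by simp
  ultimately show ?thesis using True by simp
next
  case False
  have a: "1 + y \<le> exp y" by (rule exp_ge_add_one_self)
  have b: "exp y \<le> 1" using False by simp
  have c: "\<bar>exp y - 1\<bar> = 1 - exp y" using b by simp
  show ?thesis unfolding c using a False by linarith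
qed

lemma poly_aux: "0 \<le> (d::real) \<Longrightarrow> (1 - 8 * d) * (1 + d)^2 \<le> (1 - d)^3"
proof -
  assume d: "0 \<le> d"
  have "(1 - d)^3 - (1 - 8 * d) * (1 + d)^2 = 3 * d + 18 * d^2 + 7 * d^3"
    by (simp add: power2_eq_square power3_eq_cube algebra_simps)
  moreover have "0 \<le> 3 * d + 18 * d^2 + 7 * d^3" using d by simp
  ultimately show ?thesis by simp
qed


definition VV :: "nat \<Rightarrow> real" where
  "VV M = (1 + 5 / real M) * exp (15 / real M) / ((1 - 1 / real M) * (1 - 15 / real M)) - 1"

lemma det:
  fixes n mm M :: nat and kk tt :: real
  defines "mu0 \<equiv> mu n mm" and "d \<equiv> 1 / (16 * real M)"
  assumes n20: "20 \<le> n" and M16: "16 \<le> M" and mu0p: "0 < mu0"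
    and t0: "0 < tt"
    and s2: "tt^2 / mu0 \<le> d^2 / 8"
    and s3: "real M / mu0 \<le> d / 2"
    and s4: "mu0 / real n \<le> d / 16"
    and s5: "8 / real n \<le> d"
    and s6: "\<bar>kk\<bar> / mu0 \<le> 1 / (2 * real M)"
  shows "Sup ((\<lambda>j. \<bar>Gcondexp n mm (\<lambda>E. exp (kk * sigma n mm / mu n mm * Ydeg n mm E 2) *
                             (if Ydeg n mm E 2 \<ge> tt then 1 else 0)) (\<lambda>E. deg E 1 = j) /
                     Gexp n mm (\<lambda>E. exp (kk * sigma n mm / mu n mm * Ydeg n mm E 2) *
                             (if Ydeg n mm E 2 \<ge> tt then 1 else 0)) - 1\<bar>)
                      ` {j. j < n \<and> Gprob n mm (\<lambda>E. deg E 1 = j) > 0}) \<le> VV M"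
    and "0 \<le> Sup ((\<lambda>j. \<bar>Gcondexp n mm (\<lambda>E. exp (kk * sigma n mm / mu n mm * Ydeg n mm E 2) *
                             (if Ydeg n mm E 2 \<ge> tt then 1 else 0)) (\<lambda>E. deg E 1 = j) /
                     Gexp n mm (\<lambda>E. exp (kk * sigma n mm / mu n mm * Ydeg n mm E 2) *
                             (if Ydeg n mm E 2 \<ge> tt then 1 else 0)) - 1\<bar>)
                      ` {j. j < n \<and> Gprob n mm (\<lambda>E. deg E 1 = j) > 0})"
proof -
  have nr: "20 \<le> real n" using n20 by simp
  have Mr: "16 \<le> real M" using M16 by simp
  have d0: "0 < d" unfolding d_def using Mr by simp
  have dsmall: "d \<le> 1/256" unfolding d_def using Mr by (simp add: field_simps)
  have NNr: "NN n = real n * (real n - 1) / 2" unfolding NN_def by (rule choose2_real)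
  have mu0e: "mu0 = 2 * real mm / real n"
    unfolding mu0_def mu_def pp_def NNr using nr by (simp add: field_simps)
  have mmr: "real mm = mu0 * real n / 2" using mu0e nr by (simp add: field_simps)
  have mubig: "32 * real M * real M \<le> mu0"
  proof -
    have "real M \<le> d / 2 * mu0" using s3 mu0p by (simp add: pos_divide_le_eq)
    hence "real M * (32 * real M) \<le> (d / 2 * mu0) * (32 * real M)" using Mr by (intro mult_right_mono) auto
    also have "\<dots> = mu0" unfolding d_def using Mr by (simp add: field_simps)
    finally show ?thesis by (simp add: algebra_simps)
  qed
  have "16 * 16 \<le> real M * real M" by (rule mult_mono[OF Mr Mr]) auto
  hence mu8: "8192 \<le> mu0" using mubig by simp
  have dmu: "2 \<le> d * mu0"
  proof -
    have "real M \<le> d / 2 * mu0" using s3 mu0p by (simp add: pos_divide_le_eq)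
    thus ?thesis using Mr by simp
  qed
  have dn: "8 \<le> d * real n" using s5 nr by (simp add: pos_divide_le_eq mult.commute)
  have mun: "mu0 \<le> d / 16 * real n" using s4 nr by (simp add: pos_divide_le_eq)
  have "2 * real n \<le> mu0 * real n" using mu8 by (intro mult_right_mono) auto
  hence "real n \<le> real mm" using mmr by simp
  hence nm: "n \<le> mm" by simp
  have n2sq: "real n * real n / 2 \<le> (real n - 2) * (real n - 3)"
  proof -
    have "0 \<le> real n * (real n - 10)" using nr by (intro mult_nonneg_nonneg) auto
    moreover have "(real n - 2) * (real n - 3) - real n * real n / 2 = real n * (real n - 10) / 2 + 6"
      by (simp add: field_simps)
    ultimately show ?thesis by linarith
  qed
  define K where "K = n - 2"
  define B where "B = (n - 2) choose 2"
  define r0 where "r0 = mm - (n - 1)"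
  have Kr: "real K = real n - 2" unfolding K_def using n20 by (simp add: of_nat_diff)
  have Br: "real B = (real n - 2) * (real n - 3) / 2" unfolding B_def using choose2_real[of "n-2"] n20
    by (simp add: of_nat_diff algebra_simps)
  have r0r: "real r0 = mu0 * real n / 2 - real n + 1" unfolding r0_def using nm n20 mmr by (simp add: of_nat_diff)
  have mmB: "real mm \<le> real B"
  proof -
    have "mu0 * real n \<le> d / 16 * real n * real n" using mun by (intro mult_right_mono) auto
    hence "real mm \<le> d / 32 * (real n * real n)" using mmr by simp
    also have "\<dots> \<le> 1 / 256 / 32 * (real n * real n)" using dsmall by (intro mult_right_mono) auto
    also have "\<dots> \<le> real n * real n / 4" by simp
    also have "\<dots> \<le> real B" unfolding Br using n2sq by simp
    finally show ?thesis .
  qed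
  have mB: "mm \<le> B" using mmB by simp
  define NNv where "NNv = NN n"
  define p where "p = pp n mm"
  have NNbig: "190 \<le> NNv"
  proof -
    have "20 * 19 \<le> real n * (real n - 1)" using nr by (intro mult_mono) auto
    thus ?thesis unfolding NNv_def NNr by simp
  qed
  have BN: "real B < NNv"
  proof -
    have "(real n - 2) * (real n - 3) < real n * (real n - 1)" using nr by (simp add: algebra_simps)
    thus ?thesis unfolding NNv_def NNr Br by simp
  qed
  have p0: "0 < p" unfolding p_def pp_def using nm n20 NNbig NNv_def by simp
  have p1: "p < 1" unfolding p_def pp_def using mmB BN NNbig NNv_def by (simp add: divide_less_eq)
  have mup: "(real n - 1) * p = mu0" unfolding p_def mu0_def mu_def ..
  define arg where "arg = (real n - 1) * p * (1 - p) * (NNv / (NNv - 1)) * ((NNv - (real n - 1)) / (NNv - 1))"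
  have sgdef: "sigma n mm = sqrt arg" unfolding sigma_def arg_def p_def NNv_def ..
  have nN: "real n - 1 < NNv"
  proof -
    have "2 * (real n - 1) < real n * (real n - 1)" using nr by (intro mult_strict_right_mono) auto
    thus ?thesis unfolding NNv_def NNr by simp
  qed
  have f1: "0 < NNv / (NNv - 1)" "NNv / (NNv - 1) \<le> 2" using NNbig by (auto simp: field_simps)
  have f2: "0 < (NNv - (real n - 1)) / (NNv - 1)" "(NNv - (real n - 1)) / (NNv - 1) \<le> 1"
    using NNbig nN nr by (auto simp: field_simps)
  have argp: "0 < arg" unfolding arg_def mup using mu0p p1 f1(1) f2(1) by (intro mult_pos_pos) auto
  have arg2: "arg \<le> 2 * mu0"
  proof -
    have "arg = mu0 * ((1 - p) * (NNv / (NNv - 1)) * ((NNv - (real n - 1)) / (NNv - 1)))"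
      unfolding arg_def mup[symmetric] by simp
    also have "(1 - p) * (NNv / (NNv - 1)) * ((NNv - (real n - 1)) / (NNv - 1)) \<le> 1 * 2 * 1"
      using p0 p1 f1 f2 by (intro mult_mono) auto
    finally show ?thesis using mu0p by (simp add: mult_left_mono)
  qed
  define sg where "sg = sigma n mm"
  have sg0: "0 < sg" unfolding sg_def sgdef using argp by simp
  have sgsq: "sg^2 = arg" unfolding sg_def sgdef using argp by simp
  have tsg: "tt * sg \<le> mu0 * d / 2"
  proof (rule power2_le_imp_le)
    have "tt^2 \<le> d^2 / 8 * mu0" using s2 mu0p by (simp add: pos_divide_le_eq)
    have "(tt * sg)^2 = tt^2 * arg" unfolding power_mult_distrib sgsq ..
    also have "\<dots> \<le> tt^2 * (2 * mu0)" using arg2 by (intro mult_left_mono) auto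
    also have "\<dots> \<le> (d^2 / 8 * mu0) * (2 * mu0)" using \<open>tt^2 \<le> d^2 / 8 * mu0\<close> mu0p by (intro mult_right_mono) auto
    also have "\<dots> = (mu0 * d / 2)^2" by (simp add: power2_eq_square)
    finally show "(tt * sg)^2 \<le> (mu0 * d / 2)^2" .
    show "0 \<le> mu0 * d / 2" using mu0p d0 by simp
  qed
  have tsg0: "0 \<le> tt * sg" using t0 sg0 by simp
  define th where "th = mu0 + tt * sg"
  define X where "X = th + real M"
  have Mmu: "real M \<le> mu0 * d / 2" using s3 mu0p by (simp add: pos_divide_le_eq mult.commute)
  have Xb: "X \<le> mu0 * (1 + d)" unfolding X_def th_def using tsg Mmu by (simp add: algebra_simps)
  have "mu0 * (1 + d) \<le> mu0 * 2" using dsmall mu0p by (intro mult_left_mono) auto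
  hence X2: "X \<le> 2 * mu0" using Xb by simp
  have th0: "0 < th" unfolding th_def using mu0p tsg0 by simp
  have XK: "X \<le> d * real K"
  proof -
    have "2 * mu0 \<le> d / 8 * real n" using mun by simp
    also have "\<dots> \<le> d * (real n - 2)" using d0 nr by (simp add: field_simps)
    finally show ?thesis using X2 Kr by simp
  qed
  have Xr: "X \<le> d * real r0"
  proof -
    have a: "2 * mu0 \<le> d * real n / 4 * mu0" using dn mu0p by (intro mult_right_mono) auto
    have "d * real n * 1 \<le> d * real n * (mu0 / 4)" using mu8 dn by (intro mult_left_mono) auto
    hence b: "d * real n \<le> d * real n / 4 * mu0" by simp
    have e1: "d * real n / 4 * mu0 = d * (mu0 * real n) / 4" by simp
    have e2: "d * (mu0 * real n / 2 - real n + 1) = d * (mu0 * real n) / 2 - d * real n + d" by (simp add: algebra_simps)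
    have "2 * mu0 \<le> d * (mu0 * real n / 2 - real n + 1)" unfolding e2 using a b d0 unfolding e1 by linarith
    thus ?thesis using X2 r0r by simp
  qed
  have XB: "X \<le> d * real B"
  proof -
    have "2 * mu0 \<le> d / 8 * real n" using mun by simp
    also have "\<dots> \<le> d * (real n * real n / 4)"
    proof -
      have "real n * 1 \<le> real n * real n" using nr by (intro mult_left_mono) auto
      hence "real n / 8 \<le> real n * real n / 4" by simp
      thus ?thesis using d0 by (simp add: mult_left_mono)
    qed
    also have "\<dots> \<le> d * real B" unfolding Br using n2sq d0 by (intro mult_left_mono) auto
    finally show ?thesis using X2 by simp
  qed
  have muBK: "(1 - d) * (mu0 * real B) \<le> real K * real r0"
  proof -
    have a: "(1 - d) * mu0 * (real n - 3) \<le> mu0 * real n - 2 * real n + 2"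
    proof -
      have "(1 - d) * mu0 * (real n - 3) \<le> (1 - d) * mu0 * real n" using dsmall mu0p by (intro mult_left_mono) auto
      also have "\<dots> = mu0 * real n - (d * mu0) * real n" by (simp add: algebra_simps)
      also have "\<dots> \<le> mu0 * real n - 2 * real n" using mult_right_mono[OF dmu, of "real n"] by simp
      finally show ?thesis by simp
    qed
    have "(1 - d) * (mu0 * real B) = ((1 - d) * mu0 * (real n - 3)) * ((real n - 2) / 2)" unfolding Br by simp
    also have "\<dots> \<le> (mu0 * real n - 2 * real n + 2) * ((real n - 2) / 2)" using a nr by (intro mult_right_mono) auto
    also have "\<dots> = real K * real r0" unfolding Kr r0r by (simp add: field_simps)
    finally show ?thesis .
  qed
  define \<eta> where "\<eta> = 1 / (2 * real M)"
  have eta8: "\<eta> = 8 * d" unfolding \<eta>_def d_def by simp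
  have X0: "0 \<le> X" unfolding X_def th_def using mu0p tsg0 by simp
  have "d * real K \<le> real K" using dsmall d0 by (intro mult_left_le_one_le) auto
  hence XK': "X \<le> real K" using XK by linarith
  have "d * real r0 \<le> real r0" using dsmall d0 by (intro mult_left_le_one_le) auto
  hence Xr': "X \<le> real r0" using Xr by linarith
  have Xq: "(1 - \<eta>) * X * (real B + X) \<le> (real K - X) * (real r0 - X)"
  proof -
    have B0: "0 \<le> real B" by simp
    have h1: "X \<le> (1 + d) * mu0" using Xb by (simp add: mult.commute)
    have h2: "real B + X \<le> (1 + d) * real B" using XB by (simp add: algebra_simps)
    have h3: "(1 - d) * real K \<le> real K - X" using XK by (simp add: algebra_simps)
    have h4: "(1 - d) * real r0 \<le> real r0 - X" using Xr by (simp add: algebra_simps)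
    have e0: "0 \<le> 1 - 8 * d" using dsmall by simp
    have "(1 - \<eta>) * X * (real B + X) = (1 - 8 * d) * (X * (real B + X))" unfolding eta8 by simp
    also have "\<dots> \<le> (1 - 8 * d) * (((1 + d) * mu0) * ((1 + d) * real B))"
      using h1 h2 X0 e0 d0 by (intro mult_left_mono mult_mono) auto
    also have "\<dots> = ((1 - 8 * d) * (1 + d)^2) * (mu0 * real B)" by (simp add: power2_eq_square algebra_simps)
    also have "\<dots> \<le> (1 - d)^3 * (mu0 * real B)"
      using poly_aux[of d] d0 mu0p by (intro mult_right_mono) auto
    also have "\<dots> = (1 - d)^2 * ((1 - d) * (mu0 * real B))" by (simp add: power3_eq_cube power2_eq_square)
    also have "\<dots> \<le> (1 - d)^2 * (real K * real r0)" using muBK by (intro mult_left_mono) auto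
    also have "\<dots> = ((1 - d) * real K) * ((1 - d) * real r0)" by (simp add: power2_eq_square algebra_simps)
    also have "\<dots> \<le> (real K - X) * (real r0 - X)"
      using h3 h4 dsmall XK' Xr' by (intro mult_mono) auto
    finally show ?thesis .
  qed
  define aa where "aa = kk * sg / mu0"
  define lam where "lam = exp (aa / sg)"
  have lame: "lam = exp (kk / mu0)" unfolding lam_def aa_def using sg0 by simp
  have kmu: "\<bar>kk / mu0\<bar> \<le> 1 / (2 * real M)" using s6 mu0p by (simp add: abs_divide)
  have lpow: "1/2 \<le> lam ^ i" if "i \<le> M" for i
  proof -
    have "lam ^ i = exp (real i * (kk / mu0))" unfolding lame by (rule exp_of_nat_mult[symmetric])
    moreover have "- 1/2 \<le> real i * (kk / mu0)"
    proof -
      have "\<bar>real i * (kk / mu0)\<bar> \<le> real M * (1 / (2 * real M))"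
        unfolding abs_mult using that kmu by (intro mult_mono) auto
      also have "\<dots> = 1/2" using Mr by simp
      finally have "\<bar>real i * (kk / mu0)\<bar> \<le> 1/2" .
      from abs_le_D2[OF this] show ?thesis by linarith
    qed
    moreover have "1 + real i * (kk / mu0) \<le> exp (real i * (kk / mu0))" by (rule exp_ge_add_one_self)
    ultimately show ?thesis by linarith
  qed
  have lam1: "\<bar>lam - 1\<bar> \<le> 1 / real M"
  proof -
    have "1 / (2 * real M) \<le> 1/2" using Mr by (simp add: field_simps)
    hence "\<bar>kk / mu0\<bar> \<le> 1/2" using kmu by linarith
    hence "\<bar>lam - 1\<bar> \<le> 2 * \<bar>kk / mu0\<bar>" unfolding lame by (rule exp_near1)
    also have "\<dots> \<le> 1 / real M" using kmu Mr by simp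
    finally show ?thesis .
  qed
  have lam0: "0 < lam" unfolding lame by simp
  define \<gamma> where "\<gamma> = real K / real (K + B - mm) * (\<bar>lam - 1\<bar> + 4 / real M)"
  have KBr: "real (K + B - mm) = (real n - 1) * (real n - 2) / 2 - real mm"
    using mB Kr Br by (simp add: of_nat_diff field_simps)
  have mmsmall: "real mm \<le> (real n - 1) * (real n - 2) / 6"
  proof -
    have "mu0 * real n \<le> d / 16 * real n * real n" using mun by (intro mult_right_mono) auto
    hence "real mm \<le> d / 32 * (real n * real n)" using mmr by simp
    also have "\<dots> \<le> 1 / 256 / 32 * (real n * real n)" using dsmall by (intro mult_right_mono) auto
    also have "\<dots> \<le> real n * real n / 12" by simp
    also have "\<dots> \<le> (real n - 1) * (real n - 2) / 6" using n2sq nr by (simp add: algebra_simps)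
    finally show ?thesis .
  qed
  have KBbig: "(real n - 1) * (real n - 2) / 3 \<le> real (K + B - mm)" unfolding KBr using mmsmall by simp
  have n12: "0 < (real n - 1) * (real n - 2)" using nr by simp
  have Kfrac: "real K / real (K + B - mm) \<le> 3 / (real n - 1)"
  proof -
    have p: "0 < (real n - 1) * (real n - 2) / 3" using n12 by simp
    have "real K / real (K + B - mm) \<le> real K / ((real n - 1) * (real n - 2) / 3)"
      by (rule divide_left_mono[OF KBbig]) (use p KBbig in auto)
    also have "\<dots> = 3 / (real n - 1)"
    proof -
      have ne: "real n - 1 \<noteq> 0" "real n - 2 \<noteq> 0" using nr by auto
      have "3 / (real n - 1) * ((real n - 1) * (real n - 2) / 3) = real n - 2" using ne by simp
      thus ?thesis unfolding Kr using p n20 by (simp add: divide_eq_eq)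
    qed
    finally show ?thesis .
  qed
  have g0: "0 \<le> \<gamma>" unfolding \<gamma>_def by (intro mult_nonneg_nonneg) auto
  have gn: "(real n - 1) * \<gamma> \<le> 15 / real M"
  proof -
    have "\<gamma> \<le> 3 / (real n - 1) * (1 / real M + 4 / real M)" unfolding \<gamma>_def
      using Kfrac lam1 n20 by (intro mult_mono) auto
    hence "(real n - 1) * \<gamma> \<le> (real n - 1) * (3 / (real n - 1) * (1 / real M + 4 / real M))"
      using nr by (intro mult_left_mono) auto
    also have "\<dots> = ((real n - 1) * (3 / (real n - 1))) * (1 / real M + 4 / real M)" by (simp only: mult.assoc)
    also have "(real n - 1) * (3 / (real n - 1)) = 3"
    proof -
      have "real n - 1 \<noteq> 0" using nr by simp
      thus ?thesis by (simp add: field_simps)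
    qed
    also have "3 * (1 / real M + 4 / real M) = 15 / real M" by (simp add: field_simps)
    finally show ?thesis .
  qed
  have g1: "\<gamma> < 1"
  proof -
    have "15 / real M \<le> 15 / 16" using Mr by (simp add: field_simps)
    hence "(real n - 1) * \<gamma> < real n - 1" using gn nr by linarith
    hence "(real n - 1) * \<gamma> < (real n - 1) * 1" by simp
    thus ?thesis using mult_less_cancel_left_pos[of "real n - 1" \<gamma> 1] nr by simp
  qed
  define F where "F = (\<lambda>E. exp (aa * Ydeg n mm E 2) * (if Ydeg n mm E 2 \<ge> tt then 1 else 0))"
  have Feq: "F = (\<lambda>E. exp (kk * sigma n mm / mu n mm * Ydeg n mm E 2) * (if Ydeg n mm E 2 \<ge> tt then 1 else 0))"
    unfolding F_def aa_def sg_def mu0_def ..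
  have M0: "0 < M" using M16 by simp
  have n4: "4 \<le> n" using n20 by simp
  note C = core[where muO=mu0 and sg=sg and aa=aa and lam=lam and th=th and X=X and \<eta>=\<eta> and \<gamma>=\<gamma> and K=K and B=B and rO=r0 and F=F and kk=kk and tt=tt,
      OF mu0_def[THEN meta_eq_to_obj_eq] sg_def aa_def lam_def th_def K_def B_def r0_def X_def \<eta>_def \<gamma>_def F_def n4 nm mB sg0 th0 M0 XK' Xr' Xq lpow g1]
  have RB: "(max 1 lam + 4 / real M) * (1 + \<gamma>) ^ (n - 1) / (min 1 lam * (1 - \<gamma>) ^ (n - 1)) - 1 \<le> VV M"
  proof -
    have m1: "max 1 lam \<le> 1 + 1 / real M" using lam1 Mr by (auto simp: abs_le_iff max_def)
    have "1 / real M + 4 / real M = 5 / real M" by (simp add: field_simps)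
    hence nu: "max 1 lam + 4 / real M \<le> 1 + 5 / real M" using m1 by linarith
    have rn: "real (n - 1) = real n - 1" using n20 by (simp add: of_nat_diff)
    have pw: "(1 + \<gamma>) ^ (n - 1) \<le> exp (15 / real M)"
    proof -
      have "(1 + \<gamma>) ^ (n - 1) \<le> exp \<gamma> ^ (n - 1)" using g0 by (intro power_mono) (auto simp: exp_ge_add_one_self)
      also have "\<dots> = exp (real (n - 1) * \<gamma>)" by (rule exp_of_nat_mult[symmetric])
      also have "\<dots> \<le> exp (15 / real M)" unfolding rn using gn by simp
      finally show ?thesis .
    qed
    have mi: "1 - 1 / real M \<le> min 1 lam" using lam1 Mr by (auto simp: abs_le_iff min_def)
    have bw: "1 - 15 / real M \<le> (1 - \<gamma>) ^ (n - 1)"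
    proof -
      have "1 + real (n - 1) * (- \<gamma>) \<le> (1 + - \<gamma>) ^ (n - 1)" by (rule Bernoulli_inequality) (use g1 in auto)
      thus ?thesis unfolding rn using gn by simp
    qed
    have pM1: "0 < 1 - 1 / real M" "0 < 1 - 15 / real M" using Mr by (auto simp: field_simps)
    have den: "(1 - 1 / real M) * (1 - 15 / real M) \<le> min 1 lam * (1 - \<gamma>) ^ (n - 1)"
      by (rule mult_mono[OF mi bw]) (use pM1 lam0 in auto)
    have num: "(max 1 lam + 4 / real M) * (1 + \<gamma>) ^ (n - 1) \<le> (1 + 5 / real M) * exp (15 / real M)"
      by (rule mult_mono[OF nu pw]) (use g0 in auto)
    have "(max 1 lam + 4 / real M) * (1 + \<gamma>) ^ (n - 1) / (min 1 lam * (1 - \<gamma>) ^ (n - 1))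
        \<le> (1 + 5 / real M) * exp (15 / real M) / ((1 - 1 / real M) * (1 - 15 / real M))"
      by (rule frac_le[OF _ num _ den]) (use pM1 in auto)
    thus ?thesis unfolding VV_def by simp
  qed
  show "Sup ((\<lambda>j. \<bar>Gcondexp n mm (\<lambda>E. exp (kk * sigma n mm / mu n mm * Ydeg n mm E 2) *
                             (if Ydeg n mm E 2 \<ge> tt then 1 else 0)) (\<lambda>E. deg E 1 = j) /
                     Gexp n mm (\<lambda>E. exp (kk * sigma n mm / mu n mm * Ydeg n mm E 2) *
                             (if Ydeg n mm E 2 \<ge> tt then 1 else 0)) - 1\<bar>)
                      ` {j. j < n \<and> Gprob n mm (\<lambda>E. deg E 1 = j) > 0}) \<le> VV M"
    using C(1) RB unfolding Feq by linarith
  show "0 \<le> Sup ((\<lambda>j. \<bar>Gcondexp n mm (\<lambda>E. exp (kk * sigma n mm / mu n mm * Ydeg n mm E 2) *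
                             (if Ydeg n mm E 2 \<ge> tt then 1 else 0)) (\<lambda>E. deg E 1 = j) /
                     Gexp n mm (\<lambda>E. exp (kk * sigma n mm / mu n mm * Ydeg n mm E 2) *
                             (if Ydeg n mm E 2 \<ge> tt then 1 else 0)) - 1\<bar>)
                      ` {j. j < n \<and> Gprob n mm (\<lambda>E. deg E 1 = j) > 0})"
    using C(2) unfolding Feq .
qed


lemma mu_eq: "2 \<le> n \<Longrightarrow> mu n mm = 2 * real mm / real n"
proof -
  assume n: "2 \<le> n"
  have NNe: "NN n = real n * (real n - 1) / 2" unfolding NN_def by (rule choose2_real)
  show ?thesis unfolding mu_def pp_def NNe using n by (simp add: field_simps)
qed

lemma asym:
  fixes c :: real and k :: "nat \<Rightarrow> real" and m :: "nat \<Rightarrow> nat" and t :: "nat \<Rightarrow> real"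
  assumes c0: "c > 0"
    and H1: "(\<lambda>n. (ln (real n))\<^sup>2 / k n) \<longlonglongrightarrow> 0"
    and H2: "(\<lambda>n. k n / sqrt (real n)) \<longlonglongrightarrow> 0"
    and H3: "(\<lambda>n. real (m n) / (c * (k n)\<^sup>2 * real n / ln (real n))) \<longlonglongrightarrow> 1"
    and H4: "(\<lambda>n. t n / sqrt (2 * ln (real n))) \<longlonglongrightarrow> 1"
  shows "eventually (\<lambda>n. 0 < mu n (m n) \<and> 0 < t n) sequentially"
    and "(\<lambda>n. \<bar>k n\<bar> / mu n (m n)) \<longlonglongrightarrow> 0"
    and "(\<lambda>n. 1 / mu n (m n)) \<longlonglongrightarrow> 0"
    and "(\<lambda>n. (t n)\<^sup>2 / mu n (m n)) \<longlonglongrightarrow> 0"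
    and "(\<lambda>n. mu n (m n) / real n) \<longlonglongrightarrow> 0"
proof -
  define L where "L = (\<lambda>n. ln (real n))"
  define q where "q = (\<lambda>n. real (m n) / (c * (k n)\<^sup>2 * real n / ln (real n)))"
  define u where "u = (\<lambda>n. (ln (real n))\<^sup>2 / k n)"
  define v where "v = (\<lambda>n. k n / sqrt (real n))"
  define w where "w = (\<lambda>n. t n / sqrt (2 * ln (real n)))"
  have iL: "(\<lambda>n. 1 / L n) \<longlonglongrightarrow> 0"
  proof -
    have "filterlim (\<lambda>n. ln (real n)) at_top sequentially"
      by (rule filterlim_compose[OF ln_at_top filterlim_real_sequentially])
    thus ?thesis unfolding L_def using tendsto_inverse_0_at_top by (simp add: inverse_eq_divide) blast
  qed
  have q1: "q \<longlonglongrightarrow> 1" using H3 unfolding q_def .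
  have w1: "w \<longlonglongrightarrow> 1" using H4 unfolding w_def .
  have u0: "(\<lambda>n. \<bar>u n\<bar>) \<longlonglongrightarrow> 0" using tendsto_rabs_zero[OF H1] unfolding u_def .
  have v0: "v \<longlonglongrightarrow> 0" using H2 unfolding v_def .
  have evq: "eventually (\<lambda>n. q n > 1/2) sequentially" by (rule order_tendstoD(1)[OF q1]) simp
  have evw: "eventually (\<lambda>n. w n > 1/2) sequentially" by (rule order_tendstoD(1)[OF w1]) simp
  have evn: "eventually (\<lambda>n. 3 \<le> n) sequentially" by (rule eventually_ge_at_top)
  define P where "P = (\<lambda>n. 3 \<le> n \<and> q n > 1/2 \<and> w n > 1/2)"
  have evP: "eventually P sequentially" unfolding P_def using evq evw evn by eventually_elim auto
  have facts: "0 < L n \<and> k n \<noteq> 0 \<and> mu n (m n) = 2 * q n * c * (k n)\<^sup>2 / L n \<and> t n = w n * sqrt (2 * L n)"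
    if "P n" for n
  proof -
    have n3: "3 \<le> n" and qn: "q n > 1/2" and wn: "w n > 1/2" using that unfolding P_def by auto
    have Lp: "0 < L n" unfolding L_def using n3 by simp
    have D0: "c * (k n)\<^sup>2 * real n / ln (real n) \<noteq> 0"
    proof
      assume h: "c * (k n)\<^sup>2 * real n / ln (real n) = 0"
      have "q n = 0" unfolding q_def by (subst h) simp
      thus False using qn by simp
    qed
    hence k0: "k n \<noteq> 0" by auto
    have mq: "real (m n) = q n * (c * (k n)\<^sup>2 * real n / L n)" unfolding q_def L_def using D0 by simp
    have "mu n (m n) = 2 * real (m n) / real n" using n3 by (intro mu_eq) simp
    also have "\<dots> = 2 * q n * c * (k n)\<^sup>2 / L n" unfolding mq using n3 by (simp add: field_simps)
    finally have mu: "mu n (m n) = 2 * q n * c * (k n)\<^sup>2 / L n" .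
    have s0: "sqrt (2 * L n) \<noteq> 0" using Lp by simp
    have tw: "t n = w n * sqrt (2 * L n)" unfolding w_def L_def using s0 unfolding L_def by simp
    show ?thesis using Lp k0 mu tw by simp
  qed
  show "eventually (\<lambda>n. 0 < mu n (m n) \<and> 0 < t n) sequentially"
    using evP
  proof eventually_elim
    case (elim n)
    note f = facts[OF elim]
    have "q n > 1/2" "w n > 1/2" using elim unfolding P_def by auto
    thus ?case using f c0 by (auto intro!: divide_pos_pos mult_pos_pos)
  qed
  show "(\<lambda>n. \<bar>k n\<bar> / mu n (m n)) \<longlonglongrightarrow> 0"
  proof (rule Lim_transform_eventually)
    show "(\<lambda>n. \<bar>u n\<bar> * (1 / L n) / (2 * c * q n)) \<longlonglongrightarrow> 0"
      using tendsto_divide[OF tendsto_mult[OF u0 iL] tendsto_mult[OF tendsto_const q1, of "2 * c"]] c0 by simp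
    show "\<forall>\<^sub>F n in sequentially. \<bar>u n\<bar> * (1 / L n) / (2 * c * q n) = \<bar>k n\<bar> / mu n (m n)"
      using evP
    proof eventually_elim
      case (elim n)
      note f = facts[OF elim]
      have "q n > 1/2" using elim unfolding P_def by auto
      thus ?case using f c0 unfolding u_def L_def by (simp add: field_simps power2_eq_square abs_mult abs_divide)
    qed
  qed
  show "(\<lambda>n. 1 / mu n (m n)) \<longlonglongrightarrow> 0"
  proof (rule Lim_transform_eventually)
    show "(\<lambda>n. \<bar>u n\<bar>^2 * (1 / L n)^3 / (2 * c * q n)) \<longlonglongrightarrow> 0"
      using tendsto_divide[OF tendsto_mult[OF tendsto_power[OF u0, of 2] tendsto_power[OF iL, of 3]] tendsto_mult[OF tendsto_const q1, of "2 * c"]] c0 by simp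
    show "\<forall>\<^sub>F n in sequentially. \<bar>u n\<bar>^2 * (1 / L n)^3 / (2 * c * q n) = 1 / mu n (m n)"
      using evP
    proof eventually_elim
      case (elim n)
      note f = facts[OF elim]
      have "q n > 1/2" using elim unfolding P_def by auto
      thus ?case using f c0 unfolding u_def L_def by (simp add: field_simps power2_eq_square power3_eq_cube)
    qed
  qed
  show "(\<lambda>n. (t n)\<^sup>2 / mu n (m n)) \<longlonglongrightarrow> 0"
  proof (rule Lim_transform_eventually)
    show "(\<lambda>n. (w n)^2 * \<bar>u n\<bar>^2 * (1 / L n)^2 / (c * q n)) \<longlonglongrightarrow> 0"
      using tendsto_divide[OF tendsto_mult[OF tendsto_mult[OF tendsto_power[OF w1, of 2] tendsto_power[OF u0, of 2]] tendsto_power[OF iL, of 2]] tendsto_mult[OF tendsto_const q1, of c]] c0 by simp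
    show "\<forall>\<^sub>F n in sequentially. (w n)^2 * \<bar>u n\<bar>^2 * (1 / L n)^2 / (c * q n) = (t n)\<^sup>2 / mu n (m n)"
      using evP
    proof eventually_elim
      case (elim n)
      note f = facts[OF elim]
      have "q n > 1/2" using elim unfolding P_def by auto
      moreover have "(sqrt (2 * L n))^2 = 2 * L n" using f by simp
      ultimately show ?case using f c0 unfolding u_def L_def
        by (simp add: field_simps power2_eq_square)
    qed
  qed
  show "(\<lambda>n. mu n (m n) / real n) \<longlonglongrightarrow> 0"
  proof (rule Lim_transform_eventually)
    show "(\<lambda>n. 2 * c * q n * (v n)^2 * (1 / L n)) \<longlonglongrightarrow> 0"
      using tendsto_mult[OF tendsto_mult[OF tendsto_mult[OF tendsto_const q1, of "2 * c"] tendsto_power[OF v0, of 2]] iL] by simp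
    show "\<forall>\<^sub>F n in sequentially. 2 * c * q n * (v n)^2 * (1 / L n) = mu n (m n) / real n"
      using evP
    proof eventually_elim
      case (elim n)
      note f = facts[OF elim]
      have n3: "3 \<le> n" using elim unfolding P_def by auto
      have "(v n)^2 = (k n)^2 / real n" unfolding v_def using n3 by (simp add: power_divide)
      thus ?case using f n3 by (simp add: field_simps)
    qed
  qed
qed


lemma VV_lim: "VV \<longlonglongrightarrow> 0"
proof -
  have a: "(\<lambda>M. 5 / real M) \<longlonglongrightarrow> 0" "(\<lambda>M. 15 / real M) \<longlonglongrightarrow> 0" "(\<lambda>M. 1 / real M) \<longlonglongrightarrow> 0"
    by (rule lim_const_over_n)+
  have "(\<lambda>M. (1 + 5 / real M) * exp (15 / real M) / ((1 - 1 / real M) * (1 - 15 / real M)) - 1)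
        \<longlonglongrightarrow> (1 + 0) * exp 0 / ((1 - 0) * (1 - 0)) - 1"
    by (intro tendsto_intros a) auto
  thus ?thesis unfolding VV_def[abs_def] by simp
qed

theorem mainTheorem17:
  fixes c :: real and k :: "nat \<Rightarrow> real" and m :: "nat \<Rightarrow> nat" and t :: "nat \<Rightarrow> real"
  assumes "c > 0"
    and "(\<lambda>n. (ln (real n))\<^sup>2 / k n) \<longlonglongrightarrow> 0"
    and "(\<lambda>n. k n / sqrt (real n)) \<longlonglongrightarrow> 0"
    and "(\<lambda>n. real (m n) / (c * (k n)\<^sup>2 * real n / ln (real n))) \<longlonglongrightarrow> 1"
    and "(\<lambda>n. t n / sqrt (2 * ln (real n))) \<longlonglongrightarrow> 1"
  shows "(\<lambda>n. let a = k n * sigma n (m n) / mu n (m n);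
                  F = (\<lambda>E. exp (a * Ydeg n (m n) E 2) *
                             (if Ydeg n (m n) E 2 \<ge> t n then 1 else 0))
              in Sup ((\<lambda>j. \<bar>Gcondexp n (m n) F (\<lambda>E. deg E 1 = j) / Gexp n (m n) F - 1\<bar>)
                      ` {j. j < n \<and> Gprob n (m n) (\<lambda>E. deg E 1 = j) > 0}))
         \<longlonglongrightarrow> 0"
proof -
  note A = asym[OF assms]
  define S where "S = (\<lambda>n. Sup ((\<lambda>j. \<bar>Gcondexp n (m n) (\<lambda>E. exp (k n * sigma n (m n) / mu n (m n) * Ydeg n (m n) E 2) *
                             (if Ydeg n (m n) E 2 \<ge> t n then 1 else 0)) (\<lambda>E. deg E 1 = j) /
                     Gexp n (m n) (\<lambda>E. exp (k n * sigma n (m n) / mu n (m n) * Ydeg n (m n) E 2) *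
                             (if Ydeg n (m n) E 2 \<ge> t n then 1 else 0)) - 1\<bar>)
                      ` {j. j < n \<and> Gprob n (m n) (\<lambda>E. deg E 1 = j) > 0}))"
  have ev: "eventually (\<lambda>n. S n \<le> VV M \<and> 0 \<le> S n) sequentially" if M: "16 \<le> M" for M
  proof -
    define d where "d = 1 / (16 * real M)"
    have d0: "0 < d" unfolding d_def using M by simp
    have e1: "eventually (\<lambda>n. 20 \<le> n) sequentially" by (rule eventually_ge_at_top)
    have e2: "eventually (\<lambda>n. (t n)\<^sup>2 / mu n (m n) < d^2 / 8) sequentially"
      by (rule order_tendstoD(2)[OF A(4)]) (use d0 in simp)
    have e3: "eventually (\<lambda>n. real M * (1 / mu n (m n)) < d / 2) sequentially"
      by (rule order_tendstoD(2)[OF tendsto_mult_right_zero[OF A(3)]]) (use d0 in simp)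
    have e4: "eventually (\<lambda>n. mu n (m n) / real n < d / 16) sequentially"
      by (rule order_tendstoD(2)[OF A(5)]) (use d0 in simp)
    have e5: "eventually (\<lambda>n. 8 / real n < d) sequentially"
      by (rule order_tendstoD(2)[OF lim_const_over_n]) (use d0 in simp)
    have e6: "eventually (\<lambda>n. \<bar>k n\<bar> / mu n (m n) < 1 / (2 * real M)) sequentially"
      by (rule order_tendstoD(2)[OF A(2)]) (use M in simp)
    show ?thesis using e1 e2 e3 e4 e5 e6 A(1)
    proof eventually_elim
      case (elim n)
      have s3: "real M / mu n (m n) \<le> d / 2" using elim(3) by simp
      have D: "S n \<le> VV M" "0 \<le> S n"
        unfolding S_def
        by (rule det[OF elim(1) M, of "m n" "t n" "k n", folded d_def];
            use elim s3 in \<open>auto simp: less_imp_le\<close>)+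
      thus ?case by simp
    qed
  qed
  have "S \<longlonglongrightarrow> 0"
  proof (rule order_tendstoI)
    fix a :: real assume "a < 0"
    show "eventually (\<lambda>n. a < S n) sequentially"
      using ev[OF order_refl[of "16::nat"]] by eventually_elim (use \<open>a < 0\<close> in auto)
  next
    fix a :: real assume a: "0 < a"
    have "eventually (\<lambda>M. VV M < a \<and> 16 \<le> M) sequentially"
      using order_tendstoD(2)[OF VV_lim a] eventually_ge_at_top[of 16] by eventually_elim auto
    then obtain N where N: "\<forall>n\<ge>N. VV n < a \<and> 16 \<le> n" unfolding eventually_sequentially by blast
    hence M: "VV N < a" "16 \<le> N" by auto
    show "eventually (\<lambda>n. S n < a) sequentially"
      using ev[OF M(2)] by eventually_elim (use M(1) in auto)
  qed
  thus ?thesis unfolding S_def Let_def .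
qed


end
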